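(* For all positive integers $n$ and all integers $m,k\ge 0$: $\Omega(n,k;m)\ge\Omega(n,k+1;m)$, $\Omega^*(n,k;m)\ge\Omega^*(n,k+1;m)$, and $\Omega^+(n,k;m)\ge\Omega^+(n,k+1;m)$.
   Context: Integers are written with $\bar i=-i$, totally ordered by $0<_{\mathbb Z}\bar1<_{\mathbb Z}1<_{\mathbb Z}\bar2<_{\mathbb Z}2<_{\mathbb Z}\cdots$, and $|\bar j|=j$. Write $a\prec_+ b$ if $a<_{\mathbb Z}b$ or $a=b\in\{0,1,2,\ldots\}$, and $a\prec_- b$ if $a<_{\mathbb Z}b$ or $a=b\in\{\bar1,\bar2,\ldots\}$. A permutation $\pi\in S_n$ is identified with the chain $\pi(1)<_\pi\cdots<_\pi\pi(n)$; a $\pi$-partition is a map $f:[n]\to\mathbb Z$ such that for each $1\le i<n$, $f(\pi(i))\prec_+ f(\pi(i+1))$ if $\pi(i)<\pi(i+1)$ and $f(\pi(i))\prec_- f(\pi(i+1))$ if $\pi(i)>\pi(i+1)$. $\Omega_\pi(m)$ counts $\pi$-partitions with $|f(i)|\le m$ for all $i$; $\Omega^*_\pi(m)$ counts those that additionally never take value $0$; $\Omega^+_\pi(m)$ counts those with all values in $\{1,\ldots,m\}$. Statistics: $\mathrm{des}(\pi)=|\{i: \pi(i)>\pi(i+1)\}|$; $\mathrm{pk}(\pi)=|\{2\le i\le n-1:\pi(i-1)<\pi(i)>\pi(i+1)\}|$; $\mathrm{lpk}(\pi)$ is the number of peaks of $\pi$ with the convention $\pi(0)=0$ (i.e. also counting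 $i=1$ if $\pi(1)>\pi(2)$). It is known that $\Omega_\pi(m)$ depends only on $n$ and $\mathrm{lpk}(\pi)$, $\Omega^*_\pi(m)$ only on $n$ and $\mathrm{pk}(\pi)$, and $\Omega^+_\pi(m)$ only on $n$ and $\mathrm{des}(\pi)$. Define $\Omega(n,k;m)=\Omega_\pi(m)$ for any $\pi\in S_n$ with $\mathrm{lpk}(\pi)=k$, $\Omega^*(n,k;m)=\Omega^*_\pi(m)$ for any $\pi$ with $\mathrm{pk}(\pi)=k$, $\Omega^+(n,k;m)=\Omega^+_\pi(m)$ for any $\pi$ with $\mathrm{des}(\pi)=k$, each defined to be $0$ if no such permutation exists. *)

theory Defs
  imports "HOL-Combinatorics.Permutations" "HOL-Library.FuncSet"
begin

text \<open>The total order 0 < -1 < 1 < -2 < 2 < ... on the integers, via a rank.\<close>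
definition zrank :: "int \<Rightarrow> int" where
  "zrank a = 2 * \<bar>a\<bar> - (if a < 0 then 1 else 0)"

definition zless :: "int \<Rightarrow> int \<Rightarrow> bool" where
  "zless a b \<longleftrightarrow> zrank a < zrank b"

definition prec_plus :: "int \<Rightarrow> int \<Rightarrow> bool" where
  "prec_plus a b \<longleftrightarrow> zless a b \<or> (a = b \<and> a \<ge> 0)"

definition prec_minus :: "int \<Rightarrow> int \<Rightarrow> bool" where
  "prec_minus a b \<longleftrightarrow> zless a b \<or> (a = b \<and> a < 0)"

text \<open>Permutations of [n] are functions \<pi> with \<pi> permutes {1..n}; \<pi> i is the i-th letter.\<close>
definition is_ppartition :: "nat \<Rightarrow> (nat \<Rightarrow> nat) \<Rightarrow> (nat \<Rightarrow> int) \<Rightarrow> bool" where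
  "is_ppartition n \<pi> f \<longleftrightarrow>
     (\<forall>i. 1 \<le> i \<and> i < n \<longrightarrow>
        (if \<pi> i < \<pi> (Suc i) then prec_plus (f (\<pi> i)) (f (\<pi> (Suc i)))
         else prec_minus (f (\<pi> i)) (f (\<pi> (Suc i)))))"

definition Omega_pi :: "nat \<Rightarrow> (nat \<Rightarrow> nat) \<Rightarrow> nat \<Rightarrow> nat" where
  "Omega_pi n \<pi> m = card {f \<in> {1..n} \<rightarrow>\<^sub>E {- int m..int m}. is_ppartition n \<pi> f}"

definition Omega_star_pi :: "nat \<Rightarrow> (nat \<Rightarrow> nat) \<Rightarrow> nat \<Rightarrow> nat" where
  "Omega_star_pi n \<pi> m = card {f \<in> {1..n} \<rightarrow>\<^sub>E ({- int m..int m} - {0}). is_ppartition n \<pi> f}"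

definition Omega_plus_pi :: "nat \<Rightarrow> (nat \<Rightarrow> nat) \<Rightarrow> nat \<Rightarrow> nat" where
  "Omega_plus_pi n \<pi> m = card {f \<in> {1..n} \<rightarrow>\<^sub>E {1..int m}. is_ppartition n \<pi> f}"

definition des :: "nat \<Rightarrow> (nat \<Rightarrow> nat) \<Rightarrow> nat" where
  "des n \<pi> = card {i. 1 \<le> i \<and> i < n \<and> \<pi> i > \<pi> (Suc i)}"

definition pk :: "nat \<Rightarrow> (nat \<Rightarrow> nat) \<Rightarrow> nat" where
  "pk n \<pi> = card {i. 2 \<le> i \<and> i < n \<and> \<pi> (i - 1) < \<pi> i \<and> \<pi> i > \<pi> (Suc i)}"

text \<open>Left peaks: convention \<pi>(0) = 0.\<close>
definition lpk :: "nat \<Rightarrow> (nat \<Rightarrow> nat) \<Rightarrow> nat" where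
  "lpk n \<pi> = card {i. 1 \<le> i \<and> i < n \<and>
      (if i = 1 then 0 else \<pi> (i - 1)) < \<pi> i \<and> \<pi> i > \<pi> (Suc i)}"

definition Omega :: "nat \<Rightarrow> nat \<Rightarrow> nat \<Rightarrow> nat" where
  "Omega n k m = (if \<exists>\<pi>. \<pi> permutes {1..n} \<and> lpk n \<pi> = k
     then Omega_pi n (SOME \<pi>. \<pi> permutes {1..n} \<and> lpk n \<pi> = k) m else 0)"

definition Omega_star :: "nat \<Rightarrow> nat \<Rightarrow> nat \<Rightarrow> nat" where
  "Omega_star n k m = (if \<exists>\<pi>. \<pi> permutes {1..n} \<and> pk n \<pi> = k
     then Omega_star_pi n (SOME \<pi>. \<pi> permutes {1..n} \<and> pk n \<pi> = k) m else 0)"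

definition Omega_plus :: "nat \<Rightarrow> nat \<Rightarrow> nat \<Rightarrow> nat" where
  "Omega_plus n k m = (if \<exists>\<pi>. \<pi> permutes {1..n} \<and> des n \<pi> = k
     then Omega_plus_pi n (SOME \<pi>. \<pi> permutes {1..n} \<and> des n \<pi> = k) m else 0)"

end

theory Submission
  imports Defs
begin

lemma zrank_bounds: "2 * \<bar>a\<bar> - 1 \<le> zrank a \<and> zrank a \<le> 2 * \<bar>a\<bar>"
  by (simp add: zrank_def)

lemma zless_abs: "zless a b \<Longrightarrow> \<bar>a\<bar> \<le> \<bar>b\<bar>"
  unfolding zless_def zrank_def by (auto split: if_splits)

lemma abs_lt_zless: "\<bar>a\<bar> < \<bar>b\<bar> \<Longrightarrow> zless a b"
  unfolding zless_def zrank_def by (auto split: if_splits)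

lemma prec_plus_abs: "prec_plus a b \<Longrightarrow> \<bar>a\<bar> \<le> \<bar>b\<bar>"
  unfolding prec_plus_def using zless_abs by auto

lemma prec_minus_abs: "prec_minus a b \<Longrightarrow> \<bar>a\<bar> \<le> \<bar>b\<bar>"
  unfolding prec_minus_def using zless_abs by auto

lemma prec_plus_lt: "\<bar>a\<bar> < \<bar>b\<bar> \<Longrightarrow> prec_plus a b"
  unfolding prec_plus_def using abs_lt_zless by auto

lemma prec_minus_lt: "\<bar>a\<bar> < \<bar>b\<bar> \<Longrightarrow> prec_minus a b"
  unfolding prec_minus_def using abs_lt_zless by auto

lemma prec_plus_eq: "\<bar>a\<bar> = \<bar>b\<bar> \<Longrightarrow> prec_plus a b \<longleftrightarrow> (a < 0 \<and> b > 0) \<or> (a = b \<and> a \<ge> 0)"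
  unfolding prec_plus_def zless_def zrank_def by (auto split: if_splits)

lemma prec_minus_eq: "\<bar>a\<bar> = \<bar>b\<bar> \<Longrightarrow> prec_minus a b \<longleftrightarrow> (a < 0 \<and> b > 0) \<or> (a = b \<and> a < 0)"
  unfolding prec_minus_def zless_def zrank_def by (auto split: if_splits)

definition lnk :: "(nat \<Rightarrow> bool) \<Rightarrow> nat \<Rightarrow> int \<Rightarrow> int \<Rightarrow> bool" where
  "lnk u i a b \<longleftrightarrow> (if u i then prec_plus a b else prec_minus a b)"

definition chain :: "nat \<Rightarrow> (nat \<Rightarrow> bool) \<Rightarrow> (nat \<Rightarrow> int) \<Rightarrow> bool" where
  "chain n u g \<longleftrightarrow> (\<forall>i. 1 \<le> i \<and> i < n \<longrightarrow> lnk u i (g i) (g (Suc i)))"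

lemma lnk_abs: "lnk u i a b \<Longrightarrow> \<bar>a\<bar> \<le> \<bar>b\<bar>"
  unfolding lnk_def using prec_plus_abs prec_minus_abs by (auto split: if_splits)

definition S :: "nat \<Rightarrow> (nat \<Rightarrow> bool) \<Rightarrow> (nat \<Rightarrow> nat) \<Rightarrow> (nat \<Rightarrow> int) set" where
  "S n u q = {g \<in> {1..n} \<rightarrow>\<^sub>E UNIV. (\<forall>i\<in>{1..n}. nat \<bar>g i\<bar> = q i) \<and> chain n u g}"

lemma abs_nat_cases: "nat \<bar>v\<bar> = k \<Longrightarrow> v = int k \<or> v = - int k"
  by arith

lemma S_sub: "S n u q \<subseteq> {1..n} \<rightarrow>\<^sub>E (\<Union>i\<in>{1..n}. {- int (q i), int (q i)})"
  unfolding S_def using abs_nat_cases by (fastforce simp: PiE_def Pi_def)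

lemma finite_S: "finite (S n u q)"
  by (rule finite_subset[OF S_sub]) (auto intro: finite_PiE)

lemma chain_Suc: "n \<ge> 1 \<Longrightarrow> chain (Suc n) u g \<longleftrightarrow> chain n u g \<and> lnk u n (g n) (g (Suc n))"
  unfolding chain_def by (auto simp: less_Suc_eq)

lemma chain_cong: "(\<And>i. 1 \<le> i \<Longrightarrow> i \<le> n \<Longrightarrow> g i = g' i) \<Longrightarrow> chain n u g = chain n u g'"
  unfolding chain_def by auto

lemma finite_absv: "finite {v::int. nat \<bar>v\<bar> = k \<and> R v}"
  by (rule finite_subset[of _ "{int k, - int k}"]) (use abs_nat_cases in auto)

lemma S_ext:
  assumes "n \<ge> 1"
  shows "card {g\<in>S (Suc n) u q. P (g (Suc n))} =
    (\<Sum>g\<in>S n u q. card {v. nat \<bar>v\<bar> = q (Suc n) \<and> lnk u n (g n) v \<and> P v})"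
proof -
  let ?V = "\<lambda>g. {v. nat \<bar>v\<bar> = q (Suc n) \<and> lnk u n (g n) v \<and> P v}"
  let ?T = "Sigma (S n u q) ?V"
  let ?h = "\<lambda>(g, v). g(Suc n := v)"
  have cardT: "card ?T = (\<Sum>g\<in>S n u q. card (?V g))"
    by (rule card_SigmaI) (auto simp: finite_S finite_absv)
  have inj: "inj_on ?h ?T"
  proof (rule inj_onI)
    fix x y assume x: "x \<in> ?T" and y: "y \<in> ?T" and e: "?h x = ?h y"
    obtain g v where xg: "x = (g, v)" by (cases x)
    obtain g' v' where yg: "y = (g', v')" by (cases y)
    have g: "g \<in> {1..n} \<rightarrow>\<^sub>E UNIV" "g' \<in> {1..n} \<rightarrow>\<^sub>E UNIV"
      using x y xg yg by (auto simp: S_def)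
    have "v = v'" using e xg yg by (metis case_prod_conv fun_upd_same)
    moreover have "g = g'"
    proof
      fix z show "g z = g' z"
      proof (cases "z = Suc n")
        case True then show ?thesis using g by (auto simp: PiE_def extensional_def)
      next
        case False then show ?thesis using e xg yg by (metis case_prod_conv fun_upd_other)
      qed
    qed
    ultimately show "x = y" using xg yg by simp
  qed
  have img: "?h ` ?T = {g\<in>S (Suc n) u q. P (g (Suc n))}"
  proof
    show "?h ` ?T \<subseteq> {g\<in>S (Suc n) u q. P (g (Suc n))}"
    proof (rule image_subsetI)
      fix x assume x: "x \<in> ?T"
      obtain g v where xg: "x = (g, v)" by (cases x)
      have g: "g \<in> S n u q" and v: "v \<in> ?V g" using x xg by auto
      have ch: "chain n u (g(Suc n := v)) = chain n u g"
        by (rule chain_cong) auto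
      have "g(Suc n := v) \<in> S (Suc n) u q \<and> P ((g(Suc n := v)) (Suc n))"
        using g v assms unfolding S_def
        by (auto simp: chain_Suc ch PiE_def extensional_def Pi_def le_Suc_eq)
      then show "?h x \<in> {g\<in>S (Suc n) u q. P (g (Suc n))}" using xg by simp
    qed
  next
    show "{g\<in>S (Suc n) u q. P (g (Suc n))} \<subseteq> ?h ` ?T"
    proof
      fix g assume g: "g \<in> {g\<in>S (Suc n) u q. P (g (Suc n))}"
      let ?g0 = "g(Suc n := undefined)"
      have ch: "chain n u ?g0 = chain n u g"
        by (rule chain_cong) auto
      have "?g0 \<in> S n u q"
        using g assms unfolding S_def
        by (auto simp: chain_Suc ch PiE_def extensional_def Pi_def le_Suc_eq)
      moreover have "g (Suc n) \<in> ?V ?g0"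
        using g assms unfolding S_def by (auto simp: chain_Suc)
      moreover have "g = ?h (?g0, g (Suc n))" by simp
      ultimately show "g \<in> ?h ` ?T" by blast
    qed
  qed
  have "card {g\<in>S (Suc n) u q. P (g (Suc n))} = card ?T"
    using card_image[OF inj] img by simp
  with cardT show ?thesis by simp
qed

lemma Kneg: "card {v::int. nat \<bar>v\<bar> = k \<and> R v \<and> v < 0} = (if k > 0 \<and> R (- int k) then 1 else 0)"
proof -
  have "{v::int. nat \<bar>v\<bar> = k \<and> R v \<and> v < 0} = (if k > 0 \<and> R (- int k) then {- int k} else {})"
    by (auto split: if_splits)
  then show ?thesis by simp
qed

lemma Kpos: "card {v::int. nat \<bar>v\<bar> = k \<and> R v \<and> v \<ge> 0} = (if R (int k) then 1 else 0)"
proof -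
  have "{v::int. nat \<bar>v\<bar> = k \<and> R v \<and> v \<ge> 0} = (if R (int k) then {int k} else {})"
    by (auto split: if_splits)
  then show ?thesis by simp
qed

definition negc :: "nat \<Rightarrow> (nat \<Rightarrow> bool) \<Rightarrow> (nat \<Rightarrow> nat) \<Rightarrow> nat" where
  "negc n u q = card {g\<in>S n u q. g n < 0}"

definition posc :: "nat \<Rightarrow> (nat \<Rightarrow> bool) \<Rightarrow> (nat \<Rightarrow> nat) \<Rightarrow> nat" where
  "posc n u q = card {g\<in>S n u q. g n \<ge> 0}"

lemma card_S_split: "card (S n u q) = negc n u q + posc n u q"
proof -
  have "S n u q = {g\<in>S n u q. g n < 0} \<union> {g\<in>S n u q. g n \<ge> 0}" by auto
  moreover have "card ({g\<in>S n u q. g n < 0} \<union> {g\<in>S n u q. g n \<ge> 0}) =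
      card {g\<in>S n u q. g n < 0} + card {g\<in>S n u q. g n \<ge> 0}"
    by (rule card_Un_disjoint) (auto intro: finite_subset[OF _ finite_S])
  ultimately show ?thesis unfolding negc_def posc_def by simp
qed

lemma sum_S_split:
  assumes "n \<ge> 1"
  shows "(\<Sum>g\<in>S n u q. K (g n)) = negc n u q * K (- int (q n)) + posc n u q * K (int (q n))"
proof -
  let ?A = "{g\<in>S n u q. g n < 0}" and ?B = "{g\<in>S n u q. g n \<ge> 0}"
  have fA: "finite ?A" and fB: "finite ?B" by (auto intro: finite_subset[OF _ finite_S])
  have "S n u q = ?A \<union> ?B" by auto
  moreover have "?A \<inter> ?B = {}" by auto
  ultimately have "(\<Sum>g\<in>S n u q. K (g n)) = (\<Sum>g\<in>?A. K (g n)) + (\<Sum>g\<in>?B. K (g n))"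
    using sum.union_disjoint[OF fA fB, of "\<lambda>g. K (g n)"] by simp
  also have "(\<Sum>g\<in>?A. K (g n)) = (\<Sum>g\<in>?A. K (- int (q n)))"
  proof (rule sum.cong)
    fix g assume "g \<in> ?A"
    then have h: "\<forall>i\<in>{1..n}. nat \<bar>g i\<bar> = q i" "g n < 0" by (auto simp: S_def)
    moreover have "n \<in> {1..n}" using assms by simp
    ultimately have "nat \<bar>g n\<bar> = q n" by blast
    then have "g n = - int (q n)" using h by arith
    then show "K (g n) = K (- int (q n))" by simp
  qed simp
  also have "(\<Sum>g\<in>?B. K (g n)) = (\<Sum>g\<in>?B. K (int (q n)))"
  proof (rule sum.cong)
    fix g assume "g \<in> ?B"
    then have h: "\<forall>i\<in>{1..n}. nat \<bar>g i\<bar> = q i" "g n \<ge> 0" by (auto simp: S_def)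
    moreover have "n \<in> {1..n}" using assms by simp
    ultimately have "nat \<bar>g n\<bar> = q n" by blast
    then have "g n = int (q n)" using h by arith
    then show "K (g n) = K (int (q n))" by simp
  qed simp
  finally show ?thesis unfolding negc_def posc_def by (simp add: mult.commute)
qed

lemma negc_zero: "n \<ge> 1 \<Longrightarrow> q n = 0 \<Longrightarrow> negc n u q = 0"
proof -
  assume a: "n \<ge> 1" "q n = 0"
  have "{g\<in>S n u q. g n < 0} = {}"
  proof (rule ccontr)
    assume "{g\<in>S n u q. g n < 0} \<noteq> {}"
    then obtain g where "\<forall>i\<in>{1..n}. nat \<bar>g i\<bar> = q i" "g n < 0" by (auto simp: S_def)
    then show False using a by force
  qed
  then show ?thesis unfolding negc_def by (simp only: card.empty)
qed

lemma negc_Suc: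
  "n \<ge> 1 \<Longrightarrow> negc (Suc n) u q = negc n u q * (if q (Suc n) > 0 \<and> lnk u n (- int (q n)) (- int (q (Suc n))) then 1 else 0)
     + posc n u q * (if q (Suc n) > 0 \<and> lnk u n (int (q n)) (- int (q (Suc n))) then 1 else 0)"
proof -
  assume n: "n \<ge> 1"
  have "negc (Suc n) u q = (\<Sum>g\<in>S n u q. card {v. nat \<bar>v\<bar> = q (Suc n) \<and> lnk u n (g n) v \<and> v < 0})"
    unfolding negc_def using S_ext[OF n, of u q "\<lambda>v. v < 0"] by simp
  also have "\<dots> = negc n u q * card {v. nat \<bar>v\<bar> = q (Suc n) \<and> lnk u n (- int (q n)) v \<and> v < 0}
     + posc n u q * card {v. nat \<bar>v\<bar> = q (Suc n) \<and> lnk u n (int (q n)) v \<and> v < 0}"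
    by (rule sum_S_split[OF n, where u=u and q=q and K="\<lambda>a. card {v. nat \<bar>v\<bar> = q (Suc n) \<and> lnk u n a v \<and> v < 0}"])
  finally show ?thesis by (simp only: Kneg)
qed

lemma posc_Suc:
  "n \<ge> 1 \<Longrightarrow> posc (Suc n) u q = negc n u q * (if lnk u n (- int (q n)) (int (q (Suc n))) then 1 else 0)
     + posc n u q * (if lnk u n (int (q n)) (int (q (Suc n))) then 1 else 0)"
proof -
  assume n: "n \<ge> 1"
  have "posc (Suc n) u q = (\<Sum>g\<in>S n u q. card {v. nat \<bar>v\<bar> = q (Suc n) \<and> lnk u n (g n) v \<and> v \<ge> 0})"
    unfolding posc_def using S_ext[OF n, of u q "\<lambda>v. v \<ge> 0"] by simp
  also have "\<dots> = negc n u q * card {v. nat \<bar>v\<bar> = q (Suc n) \<and> lnk u n (- int (q n)) v \<and> v \<ge> 0}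
     + posc n u q * card {v. nat \<bar>v\<bar> = q (Suc n) \<and> lnk u n (int (q n)) v \<and> v \<ge> 0}"
    by (rule sum_S_split[OF n, where u=u and q=q and K="\<lambda>a. card {v. nat \<bar>v\<bar> = q (Suc n) \<and> lnk u n a v \<and> v \<ge> 0}"])
  finally show ?thesis by (simp only: Kpos)
qed

lemma rec_cut:
  assumes "n \<ge> 1" "q n < q (Suc n)"
  shows "negc (Suc n) u q = negc n u q + posc n u q" "posc (Suc n) u q = negc n u q + posc n u q"
  using assms by (simp_all add: negc_Suc posc_Suc lnk_def prec_plus_lt prec_minus_lt)

lemma rec_down:
  assumes "n \<ge> 1" "q n = q (Suc n)" "\<not> u n"
  shows "negc (Suc n) u q = negc n u q" "posc (Suc n) u q = negc n u q"
proof -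
  show "negc (Suc n) u q = negc n u q"
    using assms negc_zero[of n q u] by (simp add: negc_Suc lnk_def prec_minus_eq)
  show "posc (Suc n) u q = negc n u q"
    using assms negc_zero[of n q u] by (simp add: posc_Suc lnk_def prec_minus_eq)
qed

lemma rec_up:
  assumes "n \<ge> 1" "q n = q (Suc n)" "u n"
  shows "negc (Suc n) u q = 0" "posc (Suc n) u q = negc n u q + posc n u q"
proof -
  show "negc (Suc n) u q = 0"
    using assms negc_zero[of n q u] by (simp add: negc_Suc lnk_def prec_plus_eq)
  show "posc (Suc n) u q = negc n u q + posc n u q"
    using assms negc_zero[of n q u] by (simp add: posc_Suc lnk_def prec_plus_eq)
qed

lemma S1_card: "card {g\<in>S 1 u q. P (g 1)} = card {v. nat \<bar>v\<bar> = q 1 \<and> True \<and> P v}"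
proof -
  let ?h = "\<lambda>v::int. restrict (\<lambda>_. v) {1..1::nat}"
  have inj: "inj_on ?h {v. nat \<bar>v\<bar> = q 1 \<and> True \<and> P v}"
  proof (rule inj_onI)
    fix v w assume "?h v = ?h w"
    then have "?h v 1 = ?h w 1" by simp
    then show "v = w" by simp
  qed
  have img: "?h ` {v. nat \<bar>v\<bar> = q 1 \<and> True \<and> P v} = {g\<in>S 1 u q. P (g 1)}"
  proof
    show "?h ` {v. nat \<bar>v\<bar> = q 1 \<and> True \<and> P v} \<subseteq> {g\<in>S 1 u q. P (g 1)}"
    proof (rule image_subsetI)
      fix v assume v: "v \<in> {v. nat \<bar>v\<bar> = q 1 \<and> True \<and> P v}"
      have "?h v \<in> {1..1} \<rightarrow>\<^sub>E UNIV" by (simp only: restrict_PiE) simp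
      then show "?h v \<in> {g\<in>S 1 u q. P (g 1)}" using v unfolding S_def chain_def by auto
    qed
    show "{g\<in>S 1 u q. P (g 1)} \<subseteq> ?h ` {v. nat \<bar>v\<bar> = q 1 \<and> True \<and> P v}"
    proof
      fix g assume g: "g \<in> {g\<in>S 1 u q. P (g 1)}"
      then have gP: "g \<in> {1..1} \<rightarrow>\<^sub>E UNIV" by (simp add: S_def)
      have "g = ?h (g 1)"
      proof
        fix x show "g x = ?h (g 1) x"
        proof (cases "x = 1")
          case True then show ?thesis by simp
        next
          case False then show ?thesis using PiE_arb[OF gP, of x] by simp
        qed
      qed
      moreover have "g 1 \<in> {v. nat \<bar>v\<bar> = q 1 \<and> True \<and> P v}" using g by (auto simp: S_def)
      ultimately show "g \<in> ?h ` {v. nat \<bar>v\<bar> = q 1 \<and> True \<and> P v}" by blast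
    qed
  qed
  have "card {g\<in>S 1 u q. P (g 1)} = card (?h ` {v. nat \<bar>v\<bar> = q 1 \<and> True \<and> P v})"
    by (simp only: img)
  also have "\<dots> = card {v. nat \<bar>v\<bar> = q 1 \<and> True \<and> P v}" by (rule card_image[OF inj])
  finally show ?thesis .
qed

lemma negc_1: "negc 1 u q = (if q 1 > 0 then 1 else 0)"
proof -
  have "negc 1 u q = card {v. nat \<bar>v\<bar> = q 1 \<and> True \<and> v < 0}"
    unfolding negc_def by (rule S1_card)
  also have "\<dots> = (if q 1 > 0 then 1 else 0)" using Kneg[of "q 1" "\<lambda>_. True"] by simp
  finally show ?thesis .
qed

lemma posc_1: "posc 1 u q = 1"
proof -
  have "posc 1 u q = card {v. nat \<bar>v\<bar> = q 1 \<and> True \<and> v \<ge> 0}"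
    unfolding posc_def by (rule S1_card)
  also have "\<dots> = 1" using Kpos[of "q 1" "\<lambda>_. True"] by simp
  finally show ?thesis .
qed

definition cutp :: "(nat \<Rightarrow> nat) \<Rightarrow> nat \<Rightarrow> bool" where
  "cutp q j \<longleftrightarrow> q j < q (Suc j)"

definition alive :: "nat \<Rightarrow> (nat \<Rightarrow> bool) \<Rightarrow> (nat \<Rightarrow> nat) \<Rightarrow> bool" where
  "alive n u q \<longleftrightarrow> (\<forall>p. 1 \<le> p \<and> p < n \<and> u (p - 1) \<and> \<not> u p \<longrightarrow> cutp q (p - 1) \<or> cutp q p)"

definition uph :: "nat \<Rightarrow> (nat \<Rightarrow> bool) \<Rightarrow> (nat \<Rightarrow> nat) \<Rightarrow> bool" where
  "uph n u q \<longleftrightarrow> u (n - 1) \<and> \<not> cutp q (n - 1)"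

definition cc :: "nat \<Rightarrow> (nat \<Rightarrow> nat) \<Rightarrow> nat" where
  "cc n q = card {j. j < n \<and> cutp q j}"

lemma cc_Suc: "cc (Suc n) q = cc n q + (if cutp q n then 1 else 0)"
proof (cases "cutp q n")
  case True
  then have "{j. j < Suc n \<and> cutp q j} = insert n {j. j < n \<and> cutp q j}"
    by (auto simp: less_Suc_eq)
  moreover have "finite {j. j < n \<and> cutp q j}" by simp
  ultimately show ?thesis unfolding cc_def using True by simp
next
  case False
  then have "{j. j < Suc n \<and> cutp q j} = {j. j < n \<and> cutp q j}"
    by (auto simp: less_Suc_eq)
  then show ?thesis unfolding cc_def using False by simp
qed

lemma alive_Suc: "n \<ge> 1 \<Longrightarrow> alive (Suc n) u q \<longleftrightarrow> alive n u q \<and> (u (n - 1) \<and> \<not> u n \<longrightarrow> cutp q (n - 1) \<or> cutp q n)"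
  unfolding alive_def by (auto simp: less_Suc_eq)

lemma closed_form:
  assumes "n \<ge> 1" "q 0 = 0" "u 0" "\<forall>j<n. q j \<le> q (Suc j)"
  shows "(\<not> alive n u q \<longrightarrow> negc n u q = 0 \<and> posc n u q = 0) \<and>
         (alive n u q \<and> uph n u q \<longrightarrow> negc n u q = 0 \<and> posc n u q = 2 ^ cc n q) \<and>
         (alive n u q \<and> \<not> uph n u q \<longrightarrow> negc n u q = posc n u q \<and> 2 * posc n u q = 2 ^ cc n q)"
  using assms(1,4)
proof (induction n rule: nat_induct_at_least)
  case base
  have cc1: "cc 1 q = (if q 1 > 0 then 1 else 0)"
    using cc_Suc[of 0 q] assms(2) by (simp add: cc_def cutp_def)
  show ?case using assms(2,3) negc_1[of u q] posc_1[of u q] cc1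
    by (auto simp: alive_def uph_def cutp_def)
next
  case (Suc n)
  then have IH: "(\<not> alive n u q \<longrightarrow> negc n u q = 0 \<and> posc n u q = 0) \<and>
         (alive n u q \<and> uph n u q \<longrightarrow> negc n u q = 0 \<and> posc n u q = 2 ^ cc n q) \<and>
         (alive n u q \<and> \<not> uph n u q \<longrightarrow> negc n u q = posc n u q \<and> 2 * posc n u q = 2 ^ cc n q)"
    by simp
  have mono: "q n \<le> q (Suc n)" using Suc.prems by simp
  have n1: "n \<ge> 1" by fact
  have ups: "uph (Suc n) u q \<longleftrightarrow> u n \<and> \<not> cutp q n" by (simp add: uph_def)
  show ?case
  proof (cases "cutp q n")
    case True
    have al: "alive (Suc n) u q = alive n u q" using alive_Suc[OF n1, of u q] True by auto
    have up: "\<not> uph (Suc n) u q" using ups True by simp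
    have c: "cc (Suc n) q = Suc (cc n q)" using cc_Suc[of n q] True by simp
    have r: "negc (Suc n) u q = negc n u q + posc n u q" "posc (Suc n) u q = negc n u q + posc n u q"
      using rec_cut[OF n1, of q u] True by (auto simp: cutp_def)
    show ?thesis
    proof (cases "alive n u q")
      case False then show ?thesis using IH al r by simp
    next
      case a: True
      then have "negc n u q + posc n u q = 2 ^ cc n q"
        using IH by (cases "uph n u q") auto
      then show ?thesis using al up r c a by simp
    qed
  next
    case nc: False
    then have eq: "q n = q (Suc n)" using mono by (simp add: cutp_def)
    have c: "cc (Suc n) q = cc n q" using cc_Suc[of n q] nc by simp
    show ?thesis
    proof (cases "u n")
      case True
      have al: "alive (Suc n) u q = alive n u q" using alive_Suc[OF n1, of u q] True by auto
      have up: "uph (Suc n) u q" using ups True nc by simp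
      have r: "negc (Suc n) u q = 0" "posc (Suc n) u q = negc n u q + posc n u q"
        using rec_up[OF n1 eq, of u] True by auto
      show ?thesis
      proof (cases "alive n u q")
        case False then show ?thesis using IH al r by simp
      next
        case a: True
        then have "negc n u q + posc n u q = 2 ^ cc n q"
          using IH by (cases "uph n u q") auto
        then show ?thesis using al up r c a by simp
      qed
    next
      case False
      have al: "alive (Suc n) u q = (alive n u q \<and> \<not> uph n u q)"
        using alive_Suc[OF n1, of u q] False nc by (auto simp: uph_def)
      have up: "\<not> uph (Suc n) u q" using ups False by simp
      have r: "negc (Suc n) u q = negc n u q" "posc (Suc n) u q = negc n u q"
        using rec_down[OF n1 eq, of u] False by auto
      show ?thesis
      proof (cases "alive n u q \<and> \<not> uph n u q")
        case True then show ?thesis using IH al r c up by simp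
      next
        case False
        then have "negc n u q = 0" using IH by auto
        then show ?thesis using al r up False by simp
      qed
    qed
  qed
qed

lemma transpose_image_in_out:
  assumes "a \<in> A" "b \<notin> A"
  shows "transpose a b ` A = insert b (A - {a})"
proof
  show "transpose a b ` A \<subseteq> insert b (A - {a})"
  proof
    fix y assume "y \<in> transpose a b ` A"
    then obtain x where x: "x \<in> A" "y = transpose a b x" by blast
    show "y \<in> insert b (A - {a})"
    proof (cases "x = a")
      case True then show ?thesis using x by simp
    next
      case False
      then have "x \<noteq> b" using x assms by auto
      then show ?thesis using x False by simp
    qed
  qed
  show "insert b (A - {a}) \<subseteq> transpose a b ` A"
  proof
    fix x assume x: "x \<in> insert b (A - {a})"
    show "x \<in> transpose a b ` A"
    proof (cases "x = b")
      case True
      then have "x = transpose a b a" by simp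
      then show ?thesis using assms by blast
    next
      case False
      then have "x \<in> A" "x \<noteq> a" "x \<noteq> b" using x by auto
      then have "x = transpose a b x" by simp
      then show ?thesis using \<open>x \<in> A\<close> by blast
    qed
  qed
qed

lemma perm_set_map_aux:
  assumes "card (A - B) = n" "finite A" "finite B" "card A = card B"
  shows "\<exists>\<rho>. \<rho> permutes (A \<union> B) \<and> \<rho> ` A = B"
  using assms
proof (induction n arbitrary: A rule: less_induct)
  case (less n)
  show ?case
  proof (cases "A - B = {}")
    case True
    then have "A \<subseteq> B" by blast
    then have "A = B" using less.prems(2,3,4) card_subset_eq by blast
    then have "id ` A = B" by simp
    moreover have "id permutes (A \<union> B)" by (rule permutes_id)
    ultimately show ?thesis by blast
  next
    case False
    then obtain a where a: "a \<in> A" "a \<notin> B" by blast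
    have cA: "card A = card (A - B) + card (A \<inter> B)"
    proof -
      have "card (A - B) = card A - card (A \<inter> B)"
        using less.prems(2) by (intro card_Diff_subset_Int) simp
      moreover have "card (A \<inter> B) \<le> card A" using less.prems(2) by (intro card_mono) auto
      ultimately show ?thesis by (simp add: Int_commute)
    qed
    have cB: "card B = card (B - A) + card (A \<inter> B)"
    proof -
      have "card (B - A) = card B - card (B \<inter> A)"
        using less.prems(3) by (intro card_Diff_subset_Int) simp
      moreover have "card (B \<inter> A) \<le> card B" using less.prems(3) by (intro card_mono) auto
      ultimately show ?thesis by (simp add: Int_commute)
    qed
    have "card (B - A) = card (A - B)" using cA cB less.prems(4) by simp
    moreover have pos: "card (A - B) > 0" using False less.prems(2) by (simp add: card_gt_0_iff)
    ultimately have "B - A \<noteq> {}" by (metis card.empty less_irrefl)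
    then obtain b where b: "b \<in> B" "b \<notin> A" by blast
    define A' where "A' = insert b (A - {a})"
    have fA': "finite A'" using less.prems(2) by (simp add: A'_def)
    have "card A' = Suc (card (A - {a}))" unfolding A'_def using b less.prems(2) by simp
    also have "\<dots> = card A" by (rule card_Suc_Diff1[OF less.prems(2) a(1)])
    finally have cA': "card A' = card B" using less.prems(4) by simp
    have "A' - B = (A - B) - {a}" using b by (auto simp: A'_def)
    then have "card (A' - B) = card ((A - B) - {a})" by simp
    also have "\<dots> < card (A - B)" by (rule card_Diff1_less) (use a less.prems(2) in auto)
    finally have lt: "card (A' - B) < n" using less.prems(1) by simp
    then obtain \<rho>' where r: "\<rho>' permutes (A' \<union> B)" "\<rho>' ` A' = B"
      using less.IH[OF lt refl fA' less.prems(3) cA'] by blast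
    have "A' \<union> B \<subseteq> A \<union> B" using b by (auto simp: A'_def)
    have r2: "\<rho>' permutes (A \<union> B)" by (rule permutes_subset[OF r(1) \<open>A' \<union> B \<subseteq> A \<union> B\<close>])
    have t: "transpose a b permutes (A \<union> B)" using a b by (intro permutes_swap_id) auto
    have "(\<rho>' \<circ> transpose a b) ` A = B"
    proof -
      have "(\<rho>' \<circ> transpose a b) ` A = \<rho>' ` (transpose a b ` A)" by (rule image_comp[symmetric])
      also have "transpose a b ` A = A'" unfolding A'_def by (rule transpose_image_in_out[OF a(1) b(2)])
      finally show ?thesis using r(2) by simp
    qed
    moreover have "(\<rho>' \<circ> transpose a b) permutes (A \<union> B)" by (rule permutes_compose[OF t r2])
    ultimately show ?thesis by blast
  qed
qed

lemma perm_set_map: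
  assumes "finite A" "finite B" "card A = card B"
  shows "\<exists>\<rho>. \<rho> permutes (A \<union> B) \<and> \<rho> ` A = B"
  using perm_set_map_aux[OF refl assms] .

lemma exists_perm_aux:
  assumes finF: "finite F" and FX: "F \<subseteq> Pow X" and dF: "pairwise disjnt F"
  and cF: "\<forall>S\<in>F. card S = k" and le: "card F \<le> card F'"
  and fX: "finite X" and F'X: "F' \<subseteq> Pow X"
  and dF': "pairwise disjnt F'" and cF': "\<forall>S\<in>F'. card S = k"
shows "\<exists>\<tau>. \<tau> permutes X \<and> (\<forall>S\<in>F. \<exists>S'\<in>F'. \<tau> ` S' = S)"
using finF FX dF cF le
proof (induction F rule: finite_induct)
  case empty
  have "id permutes X" by (rule permutes_id)
  then show ?case by blast
next
  case (insert S F0)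
  have p1: "pairwise disjnt F0" using insert.prems(2) by (rule pairwise_subset) auto
  have p2: "card F0 \<le> card F'" using insert.prems(4) insert.hyps by simp
  have p3: "F0 \<subseteq> Pow X" using insert.prems(1) by simp
  have p4: "\<forall>S\<in>F0. card S = k" using insert.prems(3) by simp
  obtain \<tau>0 where t0: "\<tau>0 permutes X" "\<forall>T\<in>F0. \<exists>T'\<in>F'. \<tau>0 ` T' = T"
    using insert.IH[OF p3 p1 p4 p2] by blast
  have injt: "inj \<tau>0" using t0(1) by (rule permutes_inj)
  let ?used = "{T'\<in>F'. \<tau>0 ` T' \<in> F0}"
  have "card ?used \<le> card F0"
  proof (rule card_inj_on_le[of "\<lambda>T. \<tau>0 ` T"])
    show "inj_on (\<lambda>T. \<tau>0 ` T) ?used"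
      by (rule inj_onI) (use injt in \<open>simp add: inj_image_eq_iff\<close>)
    show "(\<lambda>T. \<tau>0 ` T) ` ?used \<subseteq> F0" by auto
    show "finite F0" by fact
  qed
  then have "card ?used < card F'" using insert.prems(4) insert.hyps by simp
  then have "?used \<noteq> F'" by (metis less_irrefl)
  moreover have "?used \<subseteq> F'" by blast
  ultimately have "?used \<subset> F'" by blast
  then obtain S'' where "S'' \<in> F' - ?used" using psubset_imp_ex_mem by blast
  then have S'': "S'' \<in> F'" "\<tau>0 ` S'' \<notin> F0" by auto
  define A where "A = \<tau>0 ` S''"
  have S''X: "S'' \<subseteq> X" using S'' F'X by auto
  have AX: "A \<subseteq> X" unfolding A_def using S''X permutes_image[OF t0(1)] by auto
  have SX: "S \<subseteq> X" using insert.prems(1) by auto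
  have "card A = card S''" unfolding A_def using injt by (simp add: card_image inj_on_subset)
  also have "\<dots> = k" using cF' S''(1) by blast
  also have "\<dots> = card S" using insert.prems(3) by simp
  finally have cA: "card A = card S" .
  have fA: "finite A" by (rule finite_subset[OF AX fX])
  have fS: "finite S" by (rule finite_subset[OF SX fX])
  obtain \<rho> where r: "\<rho> permutes (A \<union> S)" "\<rho> ` A = S"
    using perm_set_map[OF fA fS cA] by blast
  have rX: "\<rho> permutes X" using r(1) AX SX by (intro permutes_subset[OF r(1)]) auto
  have disjT: "T \<inter> (A \<union> S) = {}" if T: "T \<in> F0" for T
  proof -
    obtain T' where T': "T' \<in> F'" "\<tau>0 ` T' = T" using t0(2) T by blast
    have "T' \<noteq> S''" using T' T S''(2) by auto
    then have "T' \<inter> S'' = {}" using dF' T' S'' by (auto simp: pairwise_def disjnt_def)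
    then have "\<tau>0 ` T' \<inter> \<tau>0 ` S'' = {}" using image_Int[OF injt, of T' S''] by simp
    then have "T \<inter> A = {}" unfolding A_def using T'(2) by simp
    moreover have "T \<inter> S = {}"
      using insert.prems(2) T insert.hyps(2) by (auto simp: pairwise_def disjnt_def)
    ultimately show ?thesis by blast
  qed
  have "(\<rho> \<circ> \<tau>0) permutes X" by (rule permutes_compose[OF t0(1) rX])
  moreover have "\<forall>T\<in>insert S F0. \<exists>T'\<in>F'. (\<rho> \<circ> \<tau>0) ` T' = T"
  proof
    fix T assume T: "T \<in> insert S F0"
    show "\<exists>T'\<in>F'. (\<rho> \<circ> \<tau>0) ` T' = T"
    proof (cases "T = S")
      case True
      have "(\<rho> \<circ> \<tau>0) ` S'' = S" using r(2) unfolding A_def by (simp add: image_comp)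
      then show ?thesis using True S''(1) by blast
    next
      case False
      then have TF0: "T \<in> F0" using T by simp
      obtain T' where T': "T' \<in> F'" "\<tau>0 ` T' = T" using t0(2) TF0 by blast
      have fx: "\<rho> x = x" if "x \<in> T" for x
      proof -
        have "x \<notin> A \<union> S" using disjT[OF TF0] that by blast
        then show "\<rho> x = x" using permutes_not_in[OF r(1)] by blast
      qed
      have "\<rho> ` T = (\<lambda>x. x) ` T" by (rule image_cong) (auto simp: fx)
      then have "\<rho> ` T = T" by simp
      moreover have "(\<rho> \<circ> \<tau>0) ` T' = \<rho> ` (\<tau>0 ` T')" by (rule image_comp[symmetric])
      ultimately have "(\<rho> \<circ> \<tau>0) ` T' = T" using T'(2) by simp
      then show ?thesis using T'(1) by blast
    qed
  qed
  ultimately show ?case by blast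
qed

lemma exists_perm:
  assumes fX: "finite X" and FX: "F \<subseteq> Pow X" and F'X: "F' \<subseteq> Pow X"
    and dF: "pairwise disjnt F" and dF': "pairwise disjnt F'"
    and cF: "\<forall>S\<in>F. card S = k" and cF': "\<forall>S\<in>F'. card S = k"
    and le: "card F \<le> card F'"
  shows "\<exists>\<tau>. \<tau> permutes X \<and> (\<forall>S\<in>F. \<exists>S'\<in>F'. \<tau> ` S' = S)"
proof -
  have finF: "finite F" by (rule finite_subset[OF FX]) (simp add: fX)
  show ?thesis by (rule exists_perm_aux[OF finF FX dF cF le fX F'X dF' cF'])
qed

definition Dset :: "nat set \<Rightarrow> nat \<Rightarrow> (nat \<Rightarrow> nat) set" where
  "Dset X M = {d \<in> X \<rightarrow>\<^sub>E UNIV. sum d X \<le> M}"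

definition supp :: "nat set \<Rightarrow> (nat \<Rightarrow> nat) \<Rightarrow> nat set" where
  "supp X d = {j\<in>X. 0 < d j}"

lemma finite_Dset: "finite X \<Longrightarrow> finite (Dset X M)"
proof -
  assume fX: "finite X"
  have "Dset X M \<subseteq> X \<rightarrow>\<^sub>E {0..M}"
  proof
    fix d assume d: "d \<in> Dset X M"
    have "\<forall>j\<in>X. d j \<le> M"
    proof
      fix j assume "j \<in> X"
      then have "d j \<le> sum d X" using fX by (intro member_le_sum) auto
      then show "d j \<le> M" using d by (auto simp: Dset_def)
    qed
    then show "d \<in> X \<rightarrow>\<^sub>E {0..M}" using d by (auto simp: Dset_def PiE_def Pi_def)
  qed
  moreover have "finite (X \<rightarrow>\<^sub>E {0..M})" using fX by (intro finite_PiE) auto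
  ultimately show ?thesis by (rule finite_subset)
qed

lemma perm_sum_le:
  fixes \<Phi> \<Phi>' :: "nat set \<Rightarrow> nat"
  assumes fX: "finite X" and t: "\<tau> permutes X" and le: "\<And>C. C \<subseteq> X \<Longrightarrow> \<Phi>' C \<le> \<Phi> (\<tau> ` C)"
  shows "(\<Sum>d\<in>Dset X M. \<Phi>' (supp X d)) \<le> (\<Sum>d\<in>Dset X M. \<Phi> (supp X d))"
proof -
  let ?R = "\<lambda>d. restrict (d \<circ> inv \<tau>) X"
  let ?R' = "\<lambda>d. restrict (d \<circ> \<tau>) X"
  have ti: "inv \<tau> permutes X" using t by (rule permutes_inv)
  have bij: "bij_betw ?R (Dset X M) (Dset X M)"
  proof (rule bij_betw_byWitness[where f'="?R'"])
    show "\<forall>d\<in>Dset X M. ?R' (?R d) = d"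
    proof
      fix d assume "d \<in> Dset X M"
      then have dE: "d \<in> X \<rightarrow>\<^sub>E UNIV" by (simp add: Dset_def)
      show "?R' (?R d) = d"
      proof
        fix x show "?R' (?R d) x = d x"
          using PiE_arb[OF dE, of x] permutes_in_image[OF t, of x] permutes_inverses(2)[OF t, of x]
          by (auto simp: restrict_def)
      qed
    qed
    show "\<forall>d\<in>Dset X M. ?R (?R' d) = d"
    proof
      fix d assume "d \<in> Dset X M"
      then have dE: "d \<in> X \<rightarrow>\<^sub>E UNIV" by (simp add: Dset_def)
      show "?R (?R' d) = d"
      proof
        fix x show "?R (?R' d) x = d x"
          using PiE_arb[OF dE, of x] permutes_in_image[OF ti, of x] permutes_inverses(1)[OF t, of x]
          by (auto simp: restrict_def)
      qed
    qed
    show "?R ` Dset X M \<subseteq> Dset X M"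
    proof
      fix e assume "e \<in> ?R ` Dset X M"
      then obtain d where d: "d \<in> Dset X M" "e = ?R d" by blast
      have "sum e X = sum (d \<circ> inv \<tau>) X" using d(2) by simp
      also have "\<dots> = sum d X" using sum.permute[OF ti, of d] by simp
      finally show "e \<in> Dset X M" using d by (auto simp: Dset_def)
    qed
    show "?R' ` Dset X M \<subseteq> Dset X M"
    proof
      fix e assume "e \<in> ?R' ` Dset X M"
      then obtain d where d: "d \<in> Dset X M" "e = ?R' d" by blast
      have "sum e X = sum (d \<circ> \<tau>) X" using d(2) by simp
      also have "\<dots> = sum d X" using sum.permute[OF t, of d] by simp
      finally show "e \<in> Dset X M" using d by (auto simp: Dset_def)
    qed
  qed
  have supp: "supp X (?R d) = \<tau> ` supp X d" for d
  proof
    show "supp X (?R d) \<subseteq> \<tau> ` supp X d"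
    proof
      fix j assume "j \<in> supp X (?R d)"
      then have j: "j \<in> X" "0 < d (inv \<tau> j)" by (auto simp: supp_def)
      then have "inv \<tau> j \<in> X" using permutes_in_image[OF ti] by simp
      then have "inv \<tau> j \<in> supp X d" using j by (simp add: supp_def)
      moreover have "j = \<tau> (inv \<tau> j)" using permutes_inverses(1)[OF t] by simp
      ultimately show "j \<in> \<tau> ` supp X d" by blast
    qed
    show "\<tau> ` supp X d \<subseteq> supp X (?R d)"
    proof
      fix j assume "j \<in> \<tau> ` supp X d"
      then obtain i where i: "i \<in> X" "0 < d i" "j = \<tau> i" by (auto simp: supp_def)
      have "\<tau> i \<in> X" using i(1) permutes_in_image[OF t] by simp
      then show "j \<in> supp X (?R d)" using i permutes_inverses(2)[OF t] by (simp add: supp_def)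
    qed
  qed
  have "(\<Sum>d\<in>Dset X M. \<Phi>' (supp X d)) \<le> (\<Sum>d\<in>Dset X M. \<Phi> (\<tau> ` supp X d))"
    by (rule sum_mono) (auto intro: le simp: supp_def)
  also have "\<dots> = (\<Sum>d\<in>Dset X M. \<Phi> (supp X (?R d)))" by (simp add: supp)
  also have "\<dots> = (\<Sum>d\<in>Dset X M. \<Phi> (supp X d))"
    by (rule sum.reindex_bij_betw[OF bij])
  finally show ?thesis .
qed

definition valid_fam :: "nat set set \<Rightarrow> nat set \<Rightarrow> bool" where
  "valid_fam F C \<longleftrightarrow> (\<forall>S\<in>F. S \<inter> C \<noteq> {})"

lemma fam_sum_le:
  fixes h :: "nat \<Rightarrow> nat"
  assumes fX: "finite X" and FX: "F \<subseteq> Pow X" and F'X: "F' \<subseteq> Pow X"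
    and dF: "pairwise disjnt F" and dF': "pairwise disjnt F'"
    and cF: "\<forall>S\<in>F. card S = k" and cF': "\<forall>S\<in>F'. card S = k"
    and le: "card F \<le> card F'"
  shows "(\<Sum>d\<in>Dset X M. if valid_fam F' (supp X d) then h (card (supp X d)) else 0)
       \<le> (\<Sum>d\<in>Dset X M. if valid_fam F (supp X d) then h (card (supp X d)) else 0)"
proof -
  obtain \<tau> where t: "\<tau> permutes X" "\<forall>S\<in>F. \<exists>S'\<in>F'. \<tau> ` S' = S"
    using exists_perm[OF fX FX F'X dF dF' cF cF' le] by blast
  have injt: "inj \<tau>" using t(1) by (rule permutes_inj)
  show ?thesis
  proof (rule perm_sum_le[OF fX t(1)])
    fix C assume "C \<subseteq> X"
    have cC: "card (\<tau> ` C) = card C" using injt by (simp add: card_image inj_on_subset)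
    show "(if valid_fam F' C then h (card C) else 0) \<le> (if valid_fam F (\<tau> ` C) then h (card (\<tau> ` C)) else 0)"
    proof (cases "valid_fam F' C")
      case True
      have "valid_fam F (\<tau> ` C)"
        unfolding valid_fam_def
      proof
        fix S assume "S \<in> F"
        then obtain S' where S': "S' \<in> F'" "\<tau> ` S' = S" using t(2) by blast
        then obtain x where "x \<in> S'" "x \<in> C" using True unfolding valid_fam_def by blast
        then have "\<tau> x \<in> S \<inter> \<tau> ` C" using S'(2) by blast
        then show "S \<inter> \<tau> ` C \<noteq> {}" by blast
      qed
      then show ?thesis using True cC by simp
    qed simp
  qed
qed

definition Gset :: "nat \<Rightarrow> (nat \<Rightarrow> bool) \<Rightarrow> int set \<Rightarrow> (nat \<Rightarrow> int) set" where
  "Gset n u V = {g \<in> {1..n} \<rightarrow>\<^sub>E V. chain n u g}"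

definition ab :: "(nat \<Rightarrow> int) \<Rightarrow> nat \<Rightarrow> nat" where
  "ab g i = (if i = 0 then 0 else nat \<bar>g i\<bar>)"

definition qf :: "nat \<Rightarrow> nat \<Rightarrow> (nat \<Rightarrow> nat) \<Rightarrow> nat \<Rightarrow> nat" where
  "qf s b d i = (if i = 0 then 0 else b + (\<Sum>j\<in>{s..<i}. d j))"

definition Fib :: "nat \<Rightarrow> (nat \<Rightarrow> bool) \<Rightarrow> int set \<Rightarrow> nat \<Rightarrow> nat \<Rightarrow> (nat \<Rightarrow> nat) \<Rightarrow> (nat \<Rightarrow> int) set" where
  "Fib n u V s b d = {g \<in> Gset n u V. \<forall>i\<in>{1..n}. nat \<bar>g i\<bar> = qf s b d i}"

lemma ab_mono:
  assumes "g \<in> Gset n u V" "j < n"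
  shows "ab g j \<le> ab g (Suc j)"
proof (cases "j = 0")
  case True then show ?thesis by (simp add: ab_def)
next
  case False
  then have "lnk u j (g j) (g (Suc j))" using assms by (auto simp: Gset_def chain_def)
  then have "\<bar>g j\<bar> \<le> \<bar>g (Suc j)\<bar>" by (rule lnk_abs)
  then show ?thesis using False by (simp add: ab_def nat_mono)
qed

lemma tele:
  assumes g: "g \<in> Gset n u V"
  shows "s \<le> i \<Longrightarrow> i \<le> n \<Longrightarrow> ab g i = ab g s + (\<Sum>j\<in>{s..<i}. ab g (Suc j) - ab g j)"
proof (induction i)
  case 0 then show ?case by simp
next
  case (Suc i)
  show ?case
  proof (cases "s = Suc i")
    case True then show ?thesis by simp
  next
    case False
    then have si: "s \<le> i" using Suc.prems by simp
    have "ab g i \<le> ab g (Suc i)" using ab_mono[OF g] Suc.prems by simp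
    then show ?thesis using Suc.IH[OF si] Suc.prems si by simp
  qed
qed

lemma qf_Suc: "s \<le> 1 \<Longrightarrow> (s = 0 \<Longrightarrow> b = 0) \<Longrightarrow> s \<le> j \<Longrightarrow> qf s b d (Suc j) = qf s b d j + d j"
  by (cases "j = 0") (auto simp: qf_def)

lemma qf_s: "s \<le> 1 \<Longrightarrow> (s = 0 \<Longrightarrow> b = 0) \<Longrightarrow> qf s b d s = b"
  by (cases s) (auto simp: qf_def)

lemma decomp:
  assumes n: "n \<ge> 1" and s: "s \<le> 1" and Bs0: "s = 0 \<Longrightarrow> Bs \<subseteq> {0}" and fB: "finite Bs"
    and fV: "finite V"
    and hB: "\<And>g. g \<in> Gset n u V \<Longrightarrow> ab g s \<in> Bs"
    and hm: "\<And>g. g \<in> Gset n u V \<Longrightarrow> nat \<bar>g n\<bar> \<le> m"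
  shows "card (Gset n u V) = (\<Sum>z\<in>Sigma Bs (\<lambda>b. Dset {s..<n} (m - b)). card (Fib n u V s (fst z) (snd z)))"
proof -
  let ?Z = "Sigma Bs (\<lambda>b. Dset {s..<n} (m - b))"
  let ?enc = "\<lambda>g. (ab g s, restrict (\<lambda>j. ab g (Suc j) - ab g j) {s..<n})"
  have finZ: "finite ?Z" by (rule finite_SigmaI[OF fB]) (simp add: finite_Dset)
  have finG: "finite (Gset n u V)"
    by (rule finite_subset[of _ "{1..n} \<rightarrow>\<^sub>E V"]) (auto simp: Gset_def intro: finite_PiE fV)
  have encZ: "?enc g \<in> ?Z" and encF: "g \<in> Fib n u V s (fst (?enc g)) (snd (?enc g))"
    if g: "g \<in> Gset n u V" for g
  proof -
    let ?d = "restrict (\<lambda>j. ab g (Suc j) - ab g j) {s..<n}"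
    have sumd: "(\<Sum>j\<in>{s..<i}. ?d j) = (\<Sum>j\<in>{s..<i}. ab g (Suc j) - ab g j)" if "i \<le> n" for i
      by (rule sum.cong) (use that in auto)
    have sn: "s \<le> n" using s n by simp
    have "ab g n = ab g s + sum ?d {s..<n}" using tele[OF g sn order_refl] sumd[of n] by simp
    moreover have "ab g n \<le> m" using hm[OF g] n by (simp add: ab_def)
    ultimately have "sum ?d {s..<n} \<le> m - ab g s" by simp
    then show "?enc g \<in> ?Z" using hB[OF g] by (auto simp: Dset_def)
    have "\<forall>i\<in>{1..n}. nat \<bar>g i\<bar> = qf s (ab g s) ?d i"
    proof
      fix i assume i: "i \<in> {1..n}"
      have si: "s \<le> i" "i \<le> n" using s i by auto
      have "nat \<bar>g i\<bar> = ab g i" using i by (simp add: ab_def)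
      also have "\<dots> = ab g s + (\<Sum>j\<in>{s..<i}. ?d j)" using tele[OF g si] sumd[of i] si by simp
      finally show "nat \<bar>g i\<bar> = qf s (ab g s) ?d i" using i by (simp add: qf_def)
    qed
    then show "g \<in> Fib n u V s (fst (?enc g)) (snd (?enc g))" using g by (simp add: Fib_def)
  qed
  have fib_enc: "?enc g = z" if z: "z \<in> ?Z" and g: "g \<in> Fib n u V s (fst z) (snd z)" for z g
  proof -
    obtain b d where zbd: "z = (b, d)" by (cases z)
    have b: "b \<in> Bs" and d: "d \<in> {s..<n} \<rightarrow>\<^sub>E UNIV" using z zbd by (auto simp: Dset_def)
    have b0: "s = 0 \<Longrightarrow> b = 0" using Bs0 b by auto
    have gG: "g \<in> Gset n u V" and gi: "\<forall>i\<in>{1..n}. nat \<bar>g i\<bar> = qf s b d i"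
      using g zbd by (auto simp: Fib_def)
    have abq: "ab g i = qf s b d i" if "i \<le> n" for i
      using gi that by (cases "i = 0") (auto simp: ab_def qf_def)
    have "ab g s = b" using abq[of s] s n qf_s[OF s b0] by simp
    moreover have "restrict (\<lambda>j. ab g (Suc j) - ab g j) {s..<n} = d"
    proof
      fix j show "restrict (\<lambda>j. ab g (Suc j) - ab g j) {s..<n} j = d j"
      proof (cases "j \<in> {s..<n}")
        case True
        then show ?thesis using abq[of j] abq[of "Suc j"] qf_Suc[OF s b0, of j d] by simp
      next
        case False
        then show ?thesis using PiE_arb[OF d False] by auto
      qed
    qed
    ultimately show ?thesis using zbd by simp
  qed
  have "Gset n u V = (\<Union>z\<in>?Z. Fib n u V s (fst z) (snd z))"
  proof
    show "Gset n u V \<subseteq> (\<Union>z\<in>?Z. Fib n u V s (fst z) (snd z))"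
    proof
      fix g assume "g \<in> Gset n u V"
      then show "g \<in> (\<Union>z\<in>?Z. Fib n u V s (fst z) (snd z))"
        using encZ[of g] encF[of g] by (intro UN_I[of "?enc g"])
    qed
    show "(\<Union>z\<in>?Z. Fib n u V s (fst z) (snd z)) \<subseteq> Gset n u V"
      by (auto simp: Fib_def)
  qed
  moreover have "card (\<Union>z\<in>?Z. Fib n u V s (fst z) (snd z)) = (\<Sum>z\<in>?Z. card (Fib n u V s (fst z) (snd z)))"
  proof (rule card_UN_disjoint[OF finZ])
    show "\<forall>z\<in>?Z. finite (Fib n u V s (fst z) (snd z))"
      using finG by (auto simp: Fib_def)
    show "\<forall>z\<in>?Z. \<forall>z'\<in>?Z. z \<noteq> z' \<longrightarrow> Fib n u V s (fst z) (snd z) \<inter> Fib n u V s (fst z') (snd z') = {}"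
    proof (intro ballI impI)
      fix z z' assume z: "z \<in> ?Z" and z': "z' \<in> ?Z" and ne: "z \<noteq> z'"
      show "Fib n u V s (fst z) (snd z) \<inter> Fib n u V s (fst z') (snd z') = {}"
      proof (rule ccontr)
        assume "Fib n u V s (fst z) (snd z) \<inter> Fib n u V s (fst z') (snd z') \<noteq> {}"
        then obtain g where "g \<in> Fib n u V s (fst z) (snd z)" "g \<in> Fib n u V s (fst z') (snd z')" by blast
        then have "?enc g = z" "?enc g = z'" using fib_enc[OF z] fib_enc[OF z'] by blast+
        then show False using ne by simp
      qed
    qed
  qed
  ultimately show ?thesis by simp
qed

lemma card_S_closed:
  assumes "n \<ge> 1" "q 0 = 0" "u 0" "\<forall>j<n. q j \<le> q (Suc j)"
  shows "card (S n u q) = (if alive n u q then 2 ^ cc n q else 0)"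
  using closed_form[where n=n and q=q and u=u, OF assms] card_S_split[of n u q] by (cases "uph n u q") auto

lemma qf_0: "qf s b d 0 = 0" by (simp add: qf_def)

lemma qf_mono:
  assumes "s \<le> 1" "s = 0 \<Longrightarrow> b = 0"
  shows "qf s b d j \<le> qf s b d (Suc j)"
proof (cases "j = 0")
  case True then show ?thesis by (simp add: qf_def)
next
  case False
  then have "s \<le> j" using assms(1) by simp
  then show ?thesis using qf_Suc[OF assms \<open>s \<le> j\<close>] by simp
qed

lemma qf_cut:
  assumes "s \<le> 1" "s = 0 \<Longrightarrow> b = 0"
  shows "cutp (qf s b d) j \<longleftrightarrow> (if j < s then 0 < b else 0 < d j)"
proof (cases "j < s")
  case True
  then have "j = 0" "s = 1" using assms(1) by auto
  then show ?thesis by (simp add: cutp_def qf_def)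
next
  case False
  then show ?thesis using qf_Suc[OF assms, of j d] by (simp add: cutp_def)
qed

lemma qf_le:
  assumes "s \<le> 1" "s = 0 \<Longrightarrow> b = 0" "i \<le> n" "s \<le> i"
  shows "qf s b d i \<le> b + sum d {s..<n}"
proof (cases "i = 0")
  case True then show ?thesis by (simp add: qf_def)
next
  case False
  have "sum d {s..<i} \<le> sum d {s..<n}" using assms(3) by (intro sum_mono2) auto
  then show ?thesis using False by (simp add: qf_def)
qed

lemma qf_ge:
  assumes "1 \<le> i"
  shows "b \<le> qf s b d i"
  using assms by (simp add: qf_def)

lemma Fib_eq_S:
  assumes "\<forall>i\<in>{1..n}. \<forall>v. nat \<bar>v\<bar> = qf s b d i \<longrightarrow> v \<in> V"
  shows "Fib n u V s b d = S n u (qf s b d)"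
  using assms unfolding Fib_def Gset_def S_def by (auto simp: PiE_def Pi_def)

definition Fpk :: "nat \<Rightarrow> (nat \<Rightarrow> bool) \<Rightarrow> nat set set" where
  "Fpk n u = (\<lambda>p. {p - 1, p}) ` {p. 2 \<le> p \<and> p < n \<and> u (p - 1) \<and> \<not> u p}"

definition Flpk :: "nat \<Rightarrow> (nat \<Rightarrow> bool) \<Rightarrow> nat set set" where
  "Flpk n u = (\<lambda>p. {p - 1, p}) ` {p. 1 \<le> p \<and> p < n \<and> u (p - 1) \<and> \<not> u p}"

definition Fdes :: "nat \<Rightarrow> (nat \<Rightarrow> bool) \<Rightarrow> nat set set" where
  "Fdes n u = (\<lambda>i. {i}) ` {i. 1 \<le> i \<and> i < n \<and> \<not> u i}"

lemma alive_star:
  assumes "0 < b"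
  shows "alive n u (qf 1 b d) \<longleftrightarrow> valid_fam (Fpk n u) (supp {1..<n} d)"
proof -
  have c: "cutp (qf 1 b d) j \<longleftrightarrow> (if j < 1 then 0 < b else 0 < d j)" for j
    by (rule qf_cut) auto
  show ?thesis
  proof
    assume al: "alive n u (qf 1 b d)"
    show "valid_fam (Fpk n u) (supp {1..<n} d)"
      unfolding valid_fam_def
    proof
      fix T assume "T \<in> Fpk n u"
      then obtain p where p: "2 \<le> p" "p < n" "u (p - 1)" "\<not> u p" and T: "T = {p - 1, p}"
        unfolding Fpk_def by blast
      have "cutp (qf 1 b d) (p - 1) \<or> cutp (qf 1 b d) p" using al p unfolding alive_def by auto
      then have "0 < d (p - 1) \<or> 0 < d p" using p(1) c[of "p - 1"] c[of p] by simp
      then show "T \<inter> supp {1..<n} d \<noteq> {}" using p(1,2) T unfolding supp_def by auto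
    qed
  next
    assume v: "valid_fam (Fpk n u) (supp {1..<n} d)"
    show "alive n u (qf 1 b d)"
      unfolding alive_def
    proof (intro allI impI)
      fix p assume p: "1 \<le> p \<and> p < n \<and> u (p - 1) \<and> \<not> u p"
      show "cutp (qf 1 b d) (p - 1) \<or> cutp (qf 1 b d) p"
      proof (cases "p = 1")
        case True then show ?thesis using assms c[of 0] by simp
      next
        case False
        then have "{p - 1, p} \<in> Fpk n u" using p unfolding Fpk_def by auto
        then have "{p - 1, p} \<inter> supp {1..<n} d \<noteq> {}" using v unfolding valid_fam_def by blast
        then have "0 < d (p - 1) \<or> 0 < d p" unfolding supp_def by auto
        then show ?thesis using False p c[of "p - 1"] c[of p] by auto
      qed
    qed
  qed
qed

lemma alive_lpk:
  shows "alive n u (qf 0 0 d) \<longleftrightarrow> valid_fam (Flpk n u) (supp {0..<n} d)"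
proof -
  have c: "cutp (qf 0 0 d) j \<longleftrightarrow> 0 < d j" for j
    using qf_cut[of 0 0 d j] by simp
  show ?thesis
  proof
    assume al: "alive n u (qf 0 0 d)"
    show "valid_fam (Flpk n u) (supp {0..<n} d)"
      unfolding valid_fam_def
    proof
      fix T assume "T \<in> Flpk n u"
      then obtain p where p: "1 \<le> p" "p < n" "u (p - 1)" "\<not> u p" and T: "T = {p - 1, p}"
        unfolding Flpk_def by blast
      have "cutp (qf 0 0 d) (p - 1) \<or> cutp (qf 0 0 d) p" using al p unfolding alive_def by auto
      then have "0 < d (p - 1) \<or> 0 < d p" by (simp add: c)
      then show "T \<inter> supp {0..<n} d \<noteq> {}" using p(1,2) T unfolding supp_def by auto
    qed
  next
    assume v: "valid_fam (Flpk n u) (supp {0..<n} d)"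
    show "alive n u (qf 0 0 d)"
      unfolding alive_def
    proof (intro allI impI)
      fix p assume p: "1 \<le> p \<and> p < n \<and> u (p - 1) \<and> \<not> u p"
      then have "{p - 1, p} \<in> Flpk n u" unfolding Flpk_def by auto
      then have "{p - 1, p} \<inter> supp {0..<n} d \<noteq> {}" using v unfolding valid_fam_def by blast
      then have "0 < d (p - 1) \<or> 0 < d p" unfolding supp_def by auto
      then show "cutp (qf 0 0 d) (p - 1) \<or> cutp (qf 0 0 d) p" by (simp add: c)
    qed
  qed
qed

lemma sum_Sigma_split:
  assumes "finite A" "\<forall>x\<in>A. finite (B x)"
  shows "(\<Sum>z\<in>Sigma A B. f (fst z) (snd z)) = (\<Sum>x\<in>A. \<Sum>y\<in>B x. f x y)"
  using sum.Sigma[OF assms, of f] by (simp add: case_prod_beta')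

lemma cc_star:
  assumes "0 < b" "n \<ge> 1"
  shows "cc n (qf 1 b d) = Suc (card (supp {1..<n} d))"
proof -
  have c: "cutp (qf 1 b d) j \<longleftrightarrow> (if j < 1 then 0 < b else 0 < d j)" for j
    by (rule qf_cut) auto
  have "{j. j < n \<and> cutp (qf 1 b d) j} = insert 0 (supp {1..<n} d)"
    using assms c by (auto simp: supp_def)
  moreover have "0 \<notin> supp {1..<n} d" by (simp add: supp_def)
  moreover have "finite (supp {1..<n} d)" by (simp add: supp_def)
  ultimately show ?thesis unfolding cc_def by simp
qed

lemma cc_lpk:
  shows "cc n (qf 0 0 d) = card (supp {0..<n} d)"
proof -
  have c: "cutp (qf 0 0 d) j \<longleftrightarrow> 0 < d j" for j
    using qf_cut[of 0 0 d j] by simp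
  have "{j. j < n \<and> cutp (qf 0 0 d) j} = supp {0..<n} d"
    using c by (auto simp: supp_def)
  then show ?thesis unfolding cc_def by simp
qed

lemma star_count:
  assumes n: "n \<ge> 1" and u0: "u 0"
  shows "card (Gset n u ({- int m..int m} - {0})) =
    (\<Sum>b\<in>{1..m}. \<Sum>d\<in>Dset {1..<n} (m - b).
       if valid_fam (Fpk n u) (supp {1..<n} d) then 2 ^ Suc (card (supp {1..<n} d)) else 0)"
proof -
  let ?V = "{- int m..int m} - {0}"
  have "card (Gset n u ?V) = (\<Sum>z\<in>Sigma {1..m} (\<lambda>b. Dset {1..<n} (m - b)). card (Fib n u ?V 1 (fst z) (snd z)))"
  proof (rule decomp[OF n])
    fix g assume g: "g \<in> Gset n u ?V"
    then have "g 1 \<in> ?V" "g n \<in> ?V" using n by (auto simp: Gset_def PiE_def Pi_def)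
    then show "ab g 1 \<in> {1..m}" "nat \<bar>g n\<bar> \<le> m" by (auto simp: ab_def)
  qed auto
  also have "\<dots> = (\<Sum>b\<in>{1..m}. \<Sum>d\<in>Dset {1..<n} (m - b). card (Fib n u ?V 1 b d))"
    by (rule sum_Sigma_split) (auto simp: finite_Dset)
  also have "\<dots> = (\<Sum>b\<in>{1..m}. \<Sum>d\<in>Dset {1..<n} (m - b).
       if valid_fam (Fpk n u) (supp {1..<n} d) then 2 ^ Suc (card (supp {1..<n} d)) else 0)"
  proof (intro sum.cong refl)
    fix b d assume b: "b \<in> {1..m}" and d: "d \<in> Dset {1..<n} (m - b)"
    have sd: "sum d {1..<n} \<le> m - b" using d by (simp add: Dset_def)
    have "\<forall>i\<in>{1..n}. \<forall>v. nat \<bar>v\<bar> = qf 1 b d i \<longrightarrow> v \<in> ?V"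
    proof (intro ballI allI impI)
      fix i v assume i: "i \<in> {1..n}" and v: "nat \<bar>v\<bar> = qf 1 b d i"
      have "qf 1 b d i \<le> b + sum d {1..<n}" using i by (intro qf_le) auto
      moreover have "b \<le> qf 1 b d i" using i by (intro qf_ge) auto
      ultimately show "v \<in> ?V" using v b sd by auto
    qed
    then have "Fib n u ?V 1 b d = S n u (qf 1 b d)" by (rule Fib_eq_S)
    moreover have "card (S n u (qf 1 b d)) = (if alive n u (qf 1 b d) then 2 ^ cc n (qf 1 b d) else 0)"
      by (rule card_S_closed[where q="qf 1 b d" and u=u and n=n, OF n qf_0 u0]) (auto intro: qf_mono)
    ultimately show "card (Fib n u ?V 1 b d) =
       (if valid_fam (Fpk n u) (supp {1..<n} d) then 2 ^ Suc (card (supp {1..<n} d)) else 0)"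
      using alive_star[of b n u d] cc_star[of b n d] b n by simp
  qed
  finally show ?thesis .
qed

lemma lpk_count:
  assumes n: "n \<ge> 1" and u0: "u 0"
  shows "card (Gset n u {- int m..int m}) =
    (\<Sum>d\<in>Dset {0..<n} m.
       if valid_fam (Flpk n u) (supp {0..<n} d) then 2 ^ card (supp {0..<n} d) else 0)"
proof -
  let ?V = "{- int m..int m}"
  have "card (Gset n u ?V) = (\<Sum>z\<in>Sigma {0} (\<lambda>b. Dset {0..<n} (m - b)). card (Fib n u ?V 0 (fst z) (snd z)))"
  proof (rule decomp[OF n])
    fix g assume g: "g \<in> Gset n u ?V"
    then have "g n \<in> ?V" using n by (auto simp: Gset_def PiE_def Pi_def)
    then show "nat \<bar>g n\<bar> \<le> m" by auto
    show "ab g 0 \<in> {0}" by (simp add: ab_def)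
  qed auto
  also have "\<dots> = (\<Sum>d\<in>Dset {0..<n} m. card (Fib n u ?V 0 0 d))"
    by (subst sum_Sigma_split) (auto simp: finite_Dset)
  also have "\<dots> = (\<Sum>d\<in>Dset {0..<n} m.
       if valid_fam (Flpk n u) (supp {0..<n} d) then 2 ^ card (supp {0..<n} d) else 0)"
  proof (intro sum.cong refl)
    fix d assume d: "d \<in> Dset {0..<n} m"
    have sd: "sum d {0..<n} \<le> m" using d by (simp add: Dset_def)
    have "\<forall>i\<in>{1..n}. \<forall>v. nat \<bar>v\<bar> = qf 0 0 d i \<longrightarrow> v \<in> ?V"
    proof (intro ballI allI impI)
      fix i v assume i: "i \<in> {1..n}" and v: "nat \<bar>v\<bar> = qf 0 0 d i"
      have "qf 0 0 d i \<le> 0 + sum d {0..<n}" using i by (intro qf_le) auto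
      then show "v \<in> ?V" using v sd by auto
    qed
    then have "Fib n u ?V 0 0 d = S n u (qf 0 0 d)" by (rule Fib_eq_S)
    moreover have "card (S n u (qf 0 0 d)) = (if alive n u (qf 0 0 d) then 2 ^ cc n (qf 0 0 d) else 0)"
      by (rule card_S_closed[where q="qf 0 0 d" and u=u and n=n, OF n qf_0 u0]) (auto intro: qf_mono)
    ultimately show "card (Fib n u ?V 0 0 d) =
       (if valid_fam (Flpk n u) (supp {0..<n} d) then 2 ^ card (supp {0..<n} d) else 0)"
      using alive_lpk[of n u d] cc_lpk[of n d] by simp
  qed
  finally show ?thesis .
qed

lemma lnk_pos:
  assumes "0 < a"
  shows "lnk u i (int a) (int (a + e)) \<longleftrightarrow> u i \<or> 0 < e"
proof (cases "0 < e")
  case True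
  then have "\<bar>int a\<bar> < \<bar>int (a + e)\<bar>" by simp
  then show ?thesis using True by (simp add: lnk_def prec_plus_lt prec_minus_lt)
next
  case False
  then have "e = 0" by simp
  then show ?thesis using assms by (simp add: lnk_def prec_plus_eq prec_minus_eq)
qed

lemma chain_des:
  assumes "0 < b"
  shows "chain n u (\<lambda>i. int (qf 1 b d i)) \<longleftrightarrow> valid_fam (Fdes n u) (supp {1..<n} d)"
proof -
  have step: "lnk u i (int (qf 1 b d i)) (int (qf 1 b d (Suc i))) \<longleftrightarrow> u i \<or> 0 < d i" if "1 \<le> i" for i
  proof -
    have "qf 1 b d (Suc i) = qf 1 b d i + d i" using that by (intro qf_Suc) auto
    moreover have "0 < qf 1 b d i" using qf_ge[of i b 1 d] that assms by simp
    ultimately show ?thesis using lnk_pos by simp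
  qed
  show ?thesis
  proof
    assume c: "chain n u (\<lambda>i. int (qf 1 b d i))"
    show "valid_fam (Fdes n u) (supp {1..<n} d)"
      unfolding valid_fam_def
    proof
      fix T assume "T \<in> Fdes n u"
      then obtain i where i: "1 \<le> i" "i < n" "\<not> u i" and T: "T = {i}" unfolding Fdes_def by blast
      have "lnk u i (int (qf 1 b d i)) (int (qf 1 b d (Suc i)))" using c i unfolding chain_def by auto
      then have "0 < d i" using step[OF i(1)] i(3) by simp
      then show "T \<inter> supp {1..<n} d \<noteq> {}" using i T by (auto simp: supp_def)
    qed
  next
    assume v: "valid_fam (Fdes n u) (supp {1..<n} d)"
    show "chain n u (\<lambda>i. int (qf 1 b d i))"
      unfolding chain_def
    proof (intro allI impI)
      fix i assume i: "1 \<le> i \<and> i < n"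
      show "lnk u i (int (qf 1 b d i)) (int (qf 1 b d (Suc i)))"
      proof (cases "u i")
        case True then show ?thesis using step i by simp
      next
        case False
        then have "{i} \<in> Fdes n u" using i unfolding Fdes_def by auto
        then have "{i} \<inter> supp {1..<n} d \<noteq> {}" using v unfolding valid_fam_def by blast
        then have "0 < d i" by (auto simp: supp_def)
        then show ?thesis using step i by simp
      qed
    qed
  qed
qed

lemma fib_des:
  assumes n: "n \<ge> 1" and b: "1 \<le> b" and sd: "b + sum d {1..<n} \<le> m"
  shows "card (Fib n u {1..int m} 1 b d) = (if valid_fam (Fdes n u) (supp {1..<n} d) then 1 else 0)"
proof -
  let ?q = "qf 1 b d"
  let ?g0 = "restrict (\<lambda>i. int (?q i)) {1..n}"
  have qr: "1 \<le> ?q i \<and> ?q i \<le> m" if "i \<in> {1..n}" for i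
  proof -
    have "?q i \<le> b + sum d {1..<n}" using that by (intro qf_le) auto
    moreover have "b \<le> ?q i" using that by (intro qf_ge) auto
    ultimately show ?thesis using b sd by simp
  qed
  have sub: "Fib n u {1..int m} 1 b d \<subseteq> {?g0}"
  proof
    fix g assume g: "g \<in> Fib n u {1..int m} 1 b d"
    then have gP: "g \<in> {1..n} \<rightarrow>\<^sub>E {1..int m}" and gq: "\<forall>i\<in>{1..n}. nat \<bar>g i\<bar> = ?q i"
      by (auto simp: Fib_def Gset_def)
    have "g = ?g0"
    proof
      fix i show "g i = ?g0 i"
      proof (cases "i \<in> {1..n}")
        case True
        then have "g i \<in> {1..int m}" using gP by (auto simp: PiE_def Pi_def)
        moreover have "nat \<bar>g i\<bar> = ?q i" using gq True by blast
        ultimately show ?thesis using True by auto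
      next
        case False then show ?thesis using PiE_arb[OF gP False] by auto
      qed
    qed
    then show "g \<in> {?g0}" by simp
  qed
  have ch: "chain n u ?g0 \<longleftrightarrow> chain n u (\<lambda>i. int (?q i))" by (rule chain_cong) auto
  have g0P: "?g0 \<in> {1..n} \<rightarrow>\<^sub>E {1..int m}" using qr by auto
  have "?g0 \<in> Fib n u {1..int m} 1 b d \<longleftrightarrow> chain n u ?g0"
    using g0P by (auto simp: Fib_def Gset_def)
  then have mem: "?g0 \<in> Fib n u {1..int m} 1 b d \<longleftrightarrow> valid_fam (Fdes n u) (supp {1..<n} d)"
    using ch chain_des[of b n u d] b by simp
  show ?thesis
  proof (cases "valid_fam (Fdes n u) (supp {1..<n} d)")
    case True
    then have "Fib n u {1..int m} 1 b d = {?g0}" using sub mem by blast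
    then show ?thesis using True by simp
  next
    case False
    then have "Fib n u {1..int m} 1 b d = {}" using sub mem by blast
    then show ?thesis using False by simp
  qed
qed

lemma des_count:
  assumes n: "n \<ge> 1"
  shows "card (Gset n u {1..int m}) =
    (\<Sum>b\<in>{1..m}. \<Sum>d\<in>Dset {1..<n} (m - b). if valid_fam (Fdes n u) (supp {1..<n} d) then 1 else 0)"
proof -
  let ?V = "{1..int m}"
  have "card (Gset n u ?V) = (\<Sum>z\<in>Sigma {1..m} (\<lambda>b. Dset {1..<n} (m - b)). card (Fib n u ?V 1 (fst z) (snd z)))"
  proof (rule decomp[OF n])
    fix g assume g: "g \<in> Gset n u ?V"
    then have "g 1 \<in> ?V" "g n \<in> ?V" using n by (auto simp: Gset_def PiE_def Pi_def)
    then show "ab g 1 \<in> {1..m}" "nat \<bar>g n\<bar> \<le> m" by (auto simp: ab_def)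
  qed auto
  also have "\<dots> = (\<Sum>b\<in>{1..m}. \<Sum>d\<in>Dset {1..<n} (m - b). card (Fib n u ?V 1 b d))"
    by (rule sum_Sigma_split) (auto simp: finite_Dset)
  also have "\<dots> = (\<Sum>b\<in>{1..m}. \<Sum>d\<in>Dset {1..<n} (m - b). if valid_fam (Fdes n u) (supp {1..<n} d) then 1 else 0)"
  proof (intro sum.cong refl)
    fix b d assume b: "b \<in> {1..m}" and d: "d \<in> Dset {1..<n} (m - b)"
    have "b + sum d {1..<n} \<le> m" using d b by (auto simp: Dset_def)
    then show "card (Fib n u ?V 1 b d) = (if valid_fam (Fdes n u) (supp {1..<n} d) then 1 else 0)"
      using fib_des[OF n] b by simp
  qed
  finally show ?thesis .
qed

lemma pair_fam:
  assumes P1: "\<forall>p\<in>P. 1 \<le> p" and nadj: "\<forall>p\<in>P. Suc p \<notin> P"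
  shows "pairwise disjnt ((\<lambda>p. {p - 1, p}) ` P)" "inj_on (\<lambda>p. {p - 1, p}) P"
    "\<forall>S\<in>(\<lambda>p. {p - 1, p}) ` P. card S = 2"
proof -
  show "inj_on (\<lambda>p. {p - 1, p}) P"
  proof (rule inj_onI)
    fix p p' assume p: "p \<in> P" "p' \<in> P" and e: "{p - 1, p} = {p' - 1, p'}"
    show "p = p'"
    proof (rule ccontr)
      assume ne: "p \<noteq> p'"
      then have "p = p' - 1" "p' = p - 1" using e by (metis doubleton_eq_iff)+
      then show False using P1 p ne by auto
    qed
  qed
  show "\<forall>S\<in>(\<lambda>p. {p - 1, p}) ` P. card S = 2"
    using P1 by auto
  show "pairwise disjnt ((\<lambda>p. {p - 1, p}) ` P)"
    unfolding pairwise_def disjnt_def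
  proof (intro ballI impI)
    fix S T assume S: "S \<in> (\<lambda>p. {p - 1, p}) ` P" and T: "T \<in> (\<lambda>p. {p - 1, p}) ` P" and ne: "S \<noteq> T"
    obtain p where p: "p \<in> P" "S = {p - 1, p}" using S by blast
    obtain p' where p': "p' \<in> P" "T = {p' - 1, p'}" using T by blast
    have "p \<noteq> p'" using ne p p' by auto
    moreover have "p' \<noteq> Suc p" using nadj p p' by auto
    moreover have "p \<noteq> Suc p'" using nadj p p' by auto
    ultimately show "S \<inter> T = {}" using p p' P1 by auto
  qed
qed

lemma sing_fam:
  shows "pairwise disjnt ((\<lambda>i. {i}) ` P)" "inj_on (\<lambda>i. {i::nat}) P"
    "\<forall>S\<in>(\<lambda>i. {i}) ` P. card S = 1"
  by (auto simp: pairwise_def disjnt_def inj_on_def)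

definition Ppk :: "nat \<Rightarrow> (nat \<Rightarrow> bool) \<Rightarrow> nat set" where
  "Ppk n u = {p. 2 \<le> p \<and> p < n \<and> u (p - 1) \<and> \<not> u p}"

definition Plpk :: "nat \<Rightarrow> (nat \<Rightarrow> bool) \<Rightarrow> nat set" where
  "Plpk n u = {p. 1 \<le> p \<and> p < n \<and> u (p - 1) \<and> \<not> u p}"

definition Pdes :: "nat \<Rightarrow> (nat \<Rightarrow> bool) \<Rightarrow> nat set" where
  "Pdes n u = {i. 1 \<le> i \<and> i < n \<and> \<not> u i}"

lemma Fpk_props:
  "Fpk n u \<subseteq> Pow {1..<n}" "pairwise disjnt (Fpk n u)" "\<forall>S\<in>Fpk n u. card S = 2"
  "card (Fpk n u) = card (Ppk n u)"
proof -
  have P1: "\<forall>p\<in>Ppk n u. 1 \<le> p" and nadj: "\<forall>p\<in>Ppk n u. Suc p \<notin> Ppk n u"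
    by (auto simp: Ppk_def)
  have F: "Fpk n u = (\<lambda>p. {p - 1, p}) ` Ppk n u" by (simp add: Fpk_def Ppk_def)
  note pf = pair_fam[OF P1 nadj]
  show "Fpk n u \<subseteq> Pow {1..<n}" by (auto simp: Fpk_def)
  show "pairwise disjnt (Fpk n u)" using pf(1) F by simp
  show "\<forall>S\<in>Fpk n u. card S = 2" using pf(3) F by simp
  show "card (Fpk n u) = card (Ppk n u)" using card_image[OF pf(2)] F by simp
qed

lemma Flpk_props:
  "Flpk n u \<subseteq> Pow {0..<n}" "pairwise disjnt (Flpk n u)" "\<forall>S\<in>Flpk n u. card S = 2"
  "card (Flpk n u) = card (Plpk n u)"
proof -
  have P1: "\<forall>p\<in>Plpk n u. 1 \<le> p" and nadj: "\<forall>p\<in>Plpk n u. Suc p \<notin> Plpk n u"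
    by (auto simp: Plpk_def)
  have F: "Flpk n u = (\<lambda>p. {p - 1, p}) ` Plpk n u" by (simp add: Flpk_def Plpk_def)
  note pf = pair_fam[OF P1 nadj]
  show "Flpk n u \<subseteq> Pow {0..<n}" by (auto simp: Flpk_def)
  show "pairwise disjnt (Flpk n u)" using pf(1) F by simp
  show "\<forall>S\<in>Flpk n u. card S = 2" using pf(3) F by simp
  show "card (Flpk n u) = card (Plpk n u)" using card_image[OF pf(2)] F by simp
qed

lemma Fdes_props:
  "Fdes n u \<subseteq> Pow {1..<n}" "pairwise disjnt (Fdes n u)" "\<forall>S\<in>Fdes n u. card S = 1"
  "card (Fdes n u) = card (Pdes n u)"
proof -
  have F: "Fdes n u = (\<lambda>i. {i}) ` Pdes n u" by (simp add: Fdes_def Pdes_def)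
  show "Fdes n u \<subseteq> Pow {1..<n}" by (auto simp: Fdes_def)
  show "pairwise disjnt (Fdes n u)" using sing_fam(1) F by simp
  show "\<forall>S\<in>Fdes n u. card S = 1" using sing_fam(3) F by simp
  show "card (Fdes n u) = card (Pdes n u)" using card_image[OF sing_fam(2)] F by simp
qed

lemma star_cmp:
  assumes n: "n \<ge> 1" and ua: "ua 0" and ub: "ub 0" and le: "card (Ppk n ua) \<le> card (Ppk n ub)"
  shows "card (Gset n ub ({- int m..int m} - {0})) \<le> card (Gset n ua ({- int m..int m} - {0}))"
  unfolding star_count[where u=ua, OF n ua] star_count[where u=ub, OF n ub]
proof (rule sum_mono)
  fix b assume "b \<in> {1..m}"
  show "(\<Sum>d\<in>Dset {1..<n} (m - b). if valid_fam (Fpk n ub) (supp {1..<n} d) then (2::nat) ^ Suc (card (supp {1..<n} d)) else 0)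
     \<le> (\<Sum>d\<in>Dset {1..<n} (m - b). if valid_fam (Fpk n ua) (supp {1..<n} d) then 2 ^ Suc (card (supp {1..<n} d)) else 0)"
    by (rule fam_sum_le[where h="\<lambda>c. 2 ^ Suc c" and k=2, OF _ Fpk_props(1) Fpk_props(1) Fpk_props(2) Fpk_props(2)
          Fpk_props(3) Fpk_props(3)]) (use le in \<open>simp_all add: Fpk_props(4)\<close>)
qed

lemma lpk_cmp:
  assumes n: "n \<ge> 1" and ua: "ua 0" and ub: "ub 0" and le: "card (Plpk n ua) \<le> card (Plpk n ub)"
  shows "card (Gset n ub {- int m..int m}) \<le> card (Gset n ua {- int m..int m})"
  unfolding lpk_count[where u=ua, OF n ua] lpk_count[where u=ub, OF n ub]
  by (rule fam_sum_le[where h="\<lambda>c. 2 ^ c" and k=2, OF _ Flpk_props(1) Flpk_props(1) Flpk_props(2) Flpk_props(2)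
          Flpk_props(3) Flpk_props(3)]) (use le in \<open>simp_all add: Flpk_props(4)\<close>)

lemma des_cmp:
  assumes n: "n \<ge> 1" and le: "card (Pdes n ua) \<le> card (Pdes n ub)"
  shows "card (Gset n ub {1..int m}) \<le> card (Gset n ua {1..int m})"
  unfolding des_count[OF n, of ua] des_count[OF n, of ub]
proof (rule sum_mono)
  fix b assume "b \<in> {1..m}"
  show "(\<Sum>d\<in>Dset {1..<n} (m - b). if valid_fam (Fdes n ub) (supp {1..<n} d) then (1::nat) else 0)
     \<le> (\<Sum>d\<in>Dset {1..<n} (m - b). if valid_fam (Fdes n ua) (supp {1..<n} d) then 1 else 0)"
    by (rule fam_sum_le[where h="\<lambda>c. 1" and k=1, OF _ Fdes_props(1) Fdes_props(1) Fdes_props(2) Fdes_props(2)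
          Fdes_props(3) Fdes_props(3)]) (use le in \<open>simp_all add: Fdes_props(4)\<close>)
qed

definition uw :: "(nat \<Rightarrow> nat) \<Rightarrow> nat \<Rightarrow> bool" where
  "uw \<pi> i \<longleftrightarrow> i = 0 \<or> \<pi> i < \<pi> (Suc i)"

lemma ppart_chain: "is_ppartition n \<pi> f \<longleftrightarrow> chain n (uw \<pi>) (f \<circ> \<pi>)"
  unfolding is_ppartition_def chain_def lnk_def uw_def by auto

lemma card_ppart:
  assumes p: "\<pi> permutes {1..n}"
  shows "card {f \<in> {1..n} \<rightarrow>\<^sub>E V. is_ppartition n \<pi> f} = card (Gset n (uw \<pi>) V)"
proof -
  let ?A = "{f \<in> {1..n} \<rightarrow>\<^sub>E V. is_ppartition n \<pi> f}"
  let ?phi = "\<lambda>f. restrict (f \<circ> \<pi>) {1..n}"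
  let ?psi = "\<lambda>g. restrict (g \<circ> inv \<pi>) {1..n}"
  have ip: "inv \<pi> permutes {1..n}" using p by (rule permutes_inv)
  have inS: "\<pi> x \<in> {1..n} \<longleftrightarrow> x \<in> {1..n}" for x using permutes_in_image[OF p] .
  have inS': "inv \<pi> x \<in> {1..n} \<longleftrightarrow> x \<in> {1..n}" for x using permutes_in_image[OF ip] .
  have ch: "chain n (uw \<pi>) (?phi f) = chain n (uw \<pi>) (f \<circ> \<pi>)" for f
    by (rule chain_cong) auto
  have ch2: "chain n (uw \<pi>) g = chain n (uw \<pi>) (?psi g \<circ> \<pi>)" for g
  proof (rule chain_cong)
    fix i assume "1 \<le> i" "i \<le> n"
    then have "\<pi> i \<in> {1..n}" using inS by simp
    then show "g i = (?psi g \<circ> \<pi>) i" by (simp add: permutes_inverses(2)[OF p])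
  qed
  have "bij_betw ?phi ?A (Gset n (uw \<pi>) V)"
  proof (rule bij_betw_byWitness[where f'="?psi"])
    show "\<forall>f\<in>?A. ?psi (?phi f) = f"
    proof
      fix f assume f: "f \<in> ?A"
      then have fP: "f \<in> {1..n} \<rightarrow>\<^sub>E V" by simp
      show "?psi (?phi f) = f"
      proof
        fix x show "?psi (?phi f) x = f x"
          using PiE_arb[OF fP, of x] inS'[of x] permutes_inverses(1)[OF p, of x] by auto
      qed
    qed
    show "\<forall>g\<in>Gset n (uw \<pi>) V. ?phi (?psi g) = g"
    proof
      fix g assume g: "g \<in> Gset n (uw \<pi>) V"
      then have gP: "g \<in> {1..n} \<rightarrow>\<^sub>E V" by (simp add: Gset_def)
      show "?phi (?psi g) = g"
      proof
        fix x show "?phi (?psi g) x = g x"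
          using PiE_arb[OF gP, of x] inS[of x] permutes_inverses(2)[OF p, of x] by auto
      qed
    qed
    show "?phi ` ?A \<subseteq> Gset n (uw \<pi>) V"
    proof
      fix h assume "h \<in> ?phi ` ?A"
      then obtain f where f: "f \<in> ?A" "h = ?phi f" by blast
      have "h \<in> {1..n} \<rightarrow>\<^sub>E V" using f inS by (auto simp: PiE_def Pi_def)
      moreover have "chain n (uw \<pi>) h" using f ch by (simp add: ppart_chain)
      ultimately show "h \<in> Gset n (uw \<pi>) V" by (simp add: Gset_def)
    qed
    show "?psi ` Gset n (uw \<pi>) V \<subseteq> ?A"
    proof
      fix h assume "h \<in> ?psi ` Gset n (uw \<pi>) V"
      then obtain g where g: "g \<in> Gset n (uw \<pi>) V" "h = ?psi g" by blast
      have "h \<in> {1..n} \<rightarrow>\<^sub>E V" using g inS' by (auto simp: PiE_def Pi_def Gset_def)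
      moreover have "chain n (uw \<pi>) (h \<circ> \<pi>)" using g ch2 by (simp add: Gset_def)
      ultimately show "h \<in> ?A" by (simp add: ppart_chain)
    qed
  qed
  then show ?thesis by (rule bij_betw_same_card)
qed

lemma uw0: "uw \<pi> 0" by (simp add: uw_def)

lemma perm_neq:
  assumes p: "\<pi> permutes {1..n}" "1 \<le> i" "i < n"
  shows "\<pi> i \<noteq> \<pi> (Suc i)"
proof
  assume e: "\<pi> i = \<pi> (Suc i)"
  have "inj \<pi>" by (rule permutes_inj[OF p(1)])
  then have "i = Suc i" using e by (rule injD)
  then show False by simp
qed

lemma uw_pos: "1 \<le> i \<Longrightarrow> uw \<pi> i \<longleftrightarrow> \<pi> i < \<pi> (Suc i)"
  by (simp add: uw_def)

lemma uw_neg: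
  assumes p: "\<pi> permutes {1..n}" and i: "1 \<le> i" "i < n"
  shows "\<not> uw \<pi> i \<longleftrightarrow> \<pi> i > \<pi> (Suc i)"
  using perm_neq[OF p i] i by (auto simp: uw_def)

lemma des_eq: "\<pi> permutes {1..n} \<Longrightarrow> des n \<pi> = card (Pdes n (uw \<pi>))"
proof -
  assume p: "\<pi> permutes {1..n}"
  have "{i. 1 \<le> i \<and> i < n \<and> \<pi> i > \<pi> (Suc i)} = Pdes n (uw \<pi>)"
  proof (rule set_eqI)
    fix i
    show "i \<in> {i. 1 \<le> i \<and> i < n \<and> \<pi> i > \<pi> (Suc i)} \<longleftrightarrow> i \<in> Pdes n (uw \<pi>)"
    proof (cases "1 \<le> i \<and> i < n")
      case True
      then have "\<not> uw \<pi> i \<longleftrightarrow> \<pi> i > \<pi> (Suc i)" using uw_neg[OF p] by blast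
      then show ?thesis using True unfolding Pdes_def by blast
    next
      case False then show ?thesis unfolding Pdes_def by blast
    qed
  qed
  then show ?thesis by (simp add: des_def)
qed

lemma pk_eq: "\<pi> permutes {1..n} \<Longrightarrow> pk n \<pi> = card (Ppk n (uw \<pi>))"
proof -
  assume p: "\<pi> permutes {1..n}"
  have "{i. 2 \<le> i \<and> i < n \<and> \<pi> (i - 1) < \<pi> i \<and> \<pi> i > \<pi> (Suc i)} = Ppk n (uw \<pi>)"
  proof (rule set_eqI)
    fix i
    show "i \<in> {i. 2 \<le> i \<and> i < n \<and> \<pi> (i - 1) < \<pi> i \<and> \<pi> i > \<pi> (Suc i)} \<longleftrightarrow> i \<in> Ppk n (uw \<pi>)"
    proof (cases "2 \<le> i \<and> i < n")
      case True
      then have s: "Suc (i - 1) = i" "1 \<le> i - 1" by auto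
      have a: "\<not> uw \<pi> i \<longleftrightarrow> \<pi> i > \<pi> (Suc i)" using uw_neg[OF p] True by simp
      have b: "uw \<pi> (i - 1) \<longleftrightarrow> \<pi> (i - 1) < \<pi> i" using uw_pos[OF s(2), of \<pi>] s(1) by simp
      show ?thesis using True a b unfolding Ppk_def by blast
    next
      case False then show ?thesis unfolding Ppk_def by blast
    qed
  qed
  then show ?thesis by (simp add: pk_def)
qed

lemma lpk_eq: "\<pi> permutes {1..n} \<Longrightarrow> lpk n \<pi> = card (Plpk n (uw \<pi>))"
proof -
  assume p: "\<pi> permutes {1..n}"
  have "{i. 1 \<le> i \<and> i < n \<and> (if i = 1 then 0 else \<pi> (i - 1)) < \<pi> i \<and> \<pi> i > \<pi> (Suc i)} = Plpk n (uw \<pi>)"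
  proof (rule set_eqI)
    fix i
    show "i \<in> {i. 1 \<le> i \<and> i < n \<and> (if i = 1 then 0 else \<pi> (i - 1)) < \<pi> i \<and> \<pi> i > \<pi> (Suc i)} \<longleftrightarrow> i \<in> Plpk n (uw \<pi>)"
    proof (cases "1 \<le> i \<and> i < n")
      case True
      have a: "\<not> uw \<pi> i \<longleftrightarrow> \<pi> i > \<pi> (Suc i)" using uw_neg[OF p] True by simp
      have b: "uw \<pi> (i - 1) \<longleftrightarrow> (if i = 1 then 0 else \<pi> (i - 1)) < \<pi> i"
      proof (cases "i = 1")
        case True2: True
        have "\<pi> i \<in> {1..n}" using True permutes_in_image[OF p, of i] by simp
        then show ?thesis using True2 by (simp add: uw_def)
      next
        case False
        then have s: "Suc (i - 1) = i" "1 \<le> i - 1" using True by auto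
        then show ?thesis using uw_pos[OF s(2), of \<pi>] False by simp
      qed
      show ?thesis using True a b unfolding Plpk_def by blast
    next
      case False then show ?thesis unfolding Plpk_def by blast
    qed
  qed
  then show ?thesis by (simp add: lpk_def)
qed

lemma bound_pairs:
  assumes fin: "finite P" and nadj: "\<forall>p\<in>P. Suc p \<notin> P" and sub: "P \<union> Suc ` P \<subseteq> A" and fA: "finite A"
  shows "2 * card P \<le> card A"
proof -
  have "P \<inter> Suc ` P = {}" using nadj by auto
  then have "card (P \<union> Suc ` P) = card P + card (Suc ` P)"
    using fin by (intro card_Un_disjoint) auto
  also have "card (Suc ` P) = card P" by (simp add: card_image)
  finally have "card (P \<union> Suc ` P) = 2 * card P" by simp
  moreover have "card (P \<union> Suc ` P) \<le> card A" by (rule card_mono[OF fA sub])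
  ultimately show ?thesis by simp
qed

lemma Ppk_bound: "n \<ge> 1 \<Longrightarrow> 2 * card (Ppk n u) + 1 \<le> n"
proof -
  assume n: "n \<ge> 1"
  have "2 * card (Ppk n u) \<le> card {2..n}"
    by (rule bound_pairs) (auto simp: Ppk_def)
  then show ?thesis using n by simp
qed

lemma Plpk_bound: "2 * card (Plpk n u) \<le> n"
proof -
  have "2 * card (Plpk n u) \<le> card {1..n}"
    by (rule bound_pairs) (auto simp: Plpk_def)
  then show ?thesis by simp
qed

lemma Pdes_bound: "n \<ge> 1 \<Longrightarrow> card (Pdes n u) + 1 \<le> n"
proof -
  assume n: "n \<ge> 1"
  have "card (Pdes n u) \<le> card {1..<n}"
    by (rule card_mono) (auto simp: Pdes_def)
  then show ?thesis using n by simp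
qed

lemma invol_permutes:
  assumes "\<And>i. \<sigma> (\<sigma> i) = i" "\<And>i. i \<notin> A \<Longrightarrow> \<sigma> i = i"
  shows "\<sigma> permutes A"
  unfolding permutes_def
proof (intro conjI allI impI)
  fix x assume "x \<notin> A" then show "\<sigma> x = x" by (rule assms(2))
next
  fix y show "\<exists>!x. \<sigma> x = y"
  proof
    show "\<sigma> (\<sigma> y) = y" by (rule assms(1))
    fix x assume "\<sigma> x = y"
    then show "x = \<sigma> y" using assms(1)[of x] by simp
  qed
qed

definition desperm :: "nat \<Rightarrow> nat \<Rightarrow> nat" where
  "desperm k i = (if 1 \<le> i \<and> i \<le> k + 1 then k + 2 - i else i)"

lemma desperm_ok:
  assumes "k + 1 \<le> n"
  shows "desperm k permutes {1..n}" "des n (desperm k) = k"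
proof -
  show p: "desperm k permutes {1..n}"
    by (rule invol_permutes) (use assms in \<open>auto simp: desperm_def\<close>)
  have "{i. 1 \<le> i \<and> i < n \<and> desperm k i > desperm k (Suc i)} = {1..k}"
    using assms by (auto simp: desperm_def)
  then show "des n (desperm k) = k" by (simp add: des_def)
qed

definition pkperm :: "nat \<Rightarrow> nat \<Rightarrow> nat" where
  "pkperm k i = (if 2 \<le> i \<and> i \<le> 2 * k + 1 then (if even i then i + 1 else i - 1) else i)"

lemma pkperm_ok:
  assumes "2 * k + 1 \<le> n"
  shows "pkperm k permutes {1..n}" "pk n (pkperm k) = k"
proof -
  show p: "pkperm k permutes {1..n}"
  proof (rule invol_permutes)
    fix i show "pkperm k (pkperm k i) = i"
    proof (cases "2 \<le> i \<and> i \<le> 2 * k + 1")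
      case True
      show ?thesis
      proof (cases "even i")
        case True2: True
        then have "i + 1 \<le> 2 * k + 1" "\<not> even (i + 1)" using True by presburger+
        then show ?thesis using True True2 by (simp add: pkperm_def)
      next
        case False
        then have "2 \<le> i - 1" "even (i - 1)" "i - 1 \<le> 2 * k + 1" using True by presburger+
        then show ?thesis using True False by (simp add: pkperm_def)
      qed
    next
      case False
      then have "pkperm k i = i" unfolding pkperm_def by auto
      then show ?thesis by simp
    qed
  next
    fix i assume "i \<notin> {1..n}"
    then have "\<not> (2 \<le> i \<and> i \<le> 2 * k + 1)" using assms by auto
    then show "pkperm k i = i" unfolding pkperm_def by auto
  qed
  have "{i. 2 \<le> i \<and> i < n \<and> pkperm k (i - 1) < pkperm k i \<and> pkperm k i > pkperm k (Suc i)} = (\<lambda>j. 2 * j) ` {1..k}"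
  proof
    show "{i. 2 \<le> i \<and> i < n \<and> pkperm k (i - 1) < pkperm k i \<and> pkperm k i > pkperm k (Suc i)} \<subseteq> (\<lambda>j. 2 * j) ` {1..k}"
    proof
      fix p assume "p \<in> {i. 2 \<le> i \<and> i < n \<and> pkperm k (i - 1) < pkperm k i \<and> pkperm k i > pkperm k (Suc i)}"
      then have p: "2 \<le> p" "p < n" "pkperm k (p - 1) < pkperm k p" "pkperm k p > pkperm k (Suc p)" by auto
      show "p \<in> (\<lambda>j. 2 * j) ` {1..k}"
      proof (cases "even p")
        case True
        then obtain j where j: "p = 2 * j" by blast
        have "p \<le> 2 * k"
        proof (rule ccontr)
          assume "\<not> p \<le> 2 * k"
          then have "\<not> p \<le> 2 * k + 1" using j by presburger
          then have "pkperm k p = p" "pkperm k (Suc p) = Suc p" unfolding pkperm_def by auto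
          then show False using p(4) by simp
        qed
        then have "j \<in> {1..k}" using j p(1) by simp
        then show ?thesis using j by (intro rev_image_eqI) auto
      next
        case False
        show ?thesis
        proof (cases "p \<le> 2 * k + 1")
          case True
          have "pkperm k p = p - 1" using True False p(1) unfolding pkperm_def by simp
          moreover have "even (p - 1)" "2 \<le> p - 1" using False p(1) by presburger+
          then have "pkperm k (p - 1) = p" using True p(1) unfolding pkperm_def by simp
          ultimately show ?thesis using p(3) by simp
        next
          case False
          then have "pkperm k p = p" "pkperm k (Suc p) = Suc p" unfolding pkperm_def by auto
          then show ?thesis using p(4) by simp
        qed
      qed
    qed
    show "(\<lambda>j. 2 * j) ` {1..k} \<subseteq> {i. 2 \<le> i \<and> i < n \<and> pkperm k (i - 1) < pkperm k i \<and> pkperm k i > pkperm k (Suc i)}"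
    proof
      fix p assume "p \<in> (\<lambda>j. 2 * j) ` {1..k}"
      then obtain j where j: "1 \<le> j" "j \<le> k" "p = 2 * j" by auto
      then obtain j' where j': "j = Suc j'" by (cases j) auto
      have a: "pkperm k p = Suc p" using j unfolding pkperm_def by simp
      have "odd (Suc p)" using j by simp
      then have b: "pkperm k (Suc p) = p" using j unfolding pkperm_def by simp
      have c: "pkperm k (p - 1) < Suc p"
      proof (cases "j' = 0")
        case True
        then have "p - 1 = 1" using j j' by simp
        then show ?thesis unfolding pkperm_def using j by simp
      next
        case False
        have e: "p - 1 = Suc (2 * j')" using j j' by simp
        then have "odd (p - 1)" by simp
        then have "pkperm k (p - 1) = p - 2" using e j j' False unfolding pkperm_def by simp
        then show ?thesis by simp
      qed
      have "2 \<le> p" "p < n" using j assms by auto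
      then show "p \<in> {i. 2 \<le> i \<and> i < n \<and> pkperm k (i - 1) < pkperm k i \<and> pkperm k i > pkperm k (Suc i)}"
        using a b c by simp
    qed
  qed
  moreover have "card ((\<lambda>j. 2 * j) ` {1..k}) = k" by (simp add: card_image inj_on_def)
  ultimately show "pk n (pkperm k) = k" by (simp add: pk_def)
qed

definition lpkperm :: "nat \<Rightarrow> nat \<Rightarrow> nat" where
  "lpkperm k i = (if 1 \<le> i \<and> i \<le> 2 * k then (if odd i then i + 1 else i - 1) else i)"

lemma lpkperm_ok:
  assumes "2 * k \<le> n"
  shows "lpkperm k permutes {1..n}" "lpk n (lpkperm k) = k"
proof -
  show p: "lpkperm k permutes {1..n}"
  proof (rule invol_permutes)
    fix i show "lpkperm k (lpkperm k i) = i"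
    proof (cases "1 \<le> i \<and> i \<le> 2 * k")
      case True
      show ?thesis
      proof (cases "odd i")
        case True2: True
        then have "i + 1 \<le> 2 * k" "even (i + 1)" using True by presburger+
        then show ?thesis using True True2 by (simp add: lpkperm_def)
      next
        case False
        then have "1 \<le> i - 1" "odd (i - 1)" "i - 1 \<le> 2 * k" using True by presburger+
        then show ?thesis using True False by (simp add: lpkperm_def)
      qed
    next
      case False
      then have "lpkperm k i = i" unfolding lpkperm_def by auto
      then show ?thesis by simp
    qed
  next
    fix i assume "i \<notin> {1..n}"
    then have "\<not> (1 \<le> i \<and> i \<le> 2 * k)" using assms by auto
    then show "lpkperm k i = i" unfolding lpkperm_def by auto
  qed
  let ?L = "\<lambda>i. if i = 1 then 0 else lpkperm k (i - 1)"
  have "{i. 1 \<le> i \<and> i < n \<and> ?L i < lpkperm k i \<and> lpkperm k i > lpkperm k (Suc i)} = (\<lambda>j. 2 * j + 1) ` {0..<k}"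
  proof
    show "{i. 1 \<le> i \<and> i < n \<and> ?L i < lpkperm k i \<and> lpkperm k i > lpkperm k (Suc i)} \<subseteq> (\<lambda>j. 2 * j + 1) ` {0..<k}"
    proof
      fix p assume "p \<in> {i. 1 \<le> i \<and> i < n \<and> ?L i < lpkperm k i \<and> lpkperm k i > lpkperm k (Suc i)}"
      then have p: "1 \<le> p" "p < n" "?L p < lpkperm k p" "lpkperm k p > lpkperm k (Suc p)" by auto
      show "p \<in> (\<lambda>j. 2 * j + 1) ` {0..<k}"
      proof (cases "p \<le> 2 * k")
        case False
        then have "lpkperm k p = p" "lpkperm k (Suc p) = Suc p" unfolding lpkperm_def by auto
        then show ?thesis using p(4) by simp
      next
        case True
        show ?thesis
        proof (cases "odd p")
          case True2: True
          then obtain j where j: "p = 2 * j + 1" by (metis oddE)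
          then have "j \<in> {0..<k}" using True by simp
          then show ?thesis using j by (intro rev_image_eqI) auto
        next
          case False
          then have "p \<noteq> 1" by auto
          have "lpkperm k p = p - 1" using True False p(1) unfolding lpkperm_def by simp
          moreover have "odd (p - 1)" "1 \<le> p - 1" using False p(1) by presburger+
          then have "lpkperm k (p - 1) = p" using True p(1) unfolding lpkperm_def by simp
          ultimately show ?thesis using p(3) \<open>p \<noteq> 1\<close> by simp
        qed
      qed
    qed
    show "(\<lambda>j. 2 * j + 1) ` {0..<k} \<subseteq> {i. 1 \<le> i \<and> i < n \<and> ?L i < lpkperm k i \<and> lpkperm k i > lpkperm k (Suc i)}"
    proof
      fix p assume "p \<in> (\<lambda>j. 2 * j + 1) ` {0..<k}"
      then obtain j where j: "j < k" "p = 2 * j + 1" by auto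
      have a: "lpkperm k p = Suc p" using j unfolding lpkperm_def by simp
      have "even (Suc p)" using j by simp
      then have b: "lpkperm k (Suc p) = p" using j unfolding lpkperm_def by simp
      have c: "?L p < Suc p"
      proof (cases "j = 0")
        case True
        then show ?thesis using j by simp
      next
        case False
        have e: "p - 1 = 2 * j" using j by simp
        then have "even (p - 1)" by simp
        then have "lpkperm k (p - 1) = p - 2" using e j False unfolding lpkperm_def by simp
        then show ?thesis using False j by simp
      qed
      have "1 \<le> p" "p < n" using j assms by auto
      then show "p \<in> {i. 1 \<le> i \<and> i < n \<and> ?L i < lpkperm k i \<and> lpkperm k i > lpkperm k (Suc i)}"
        using a b c by simp
    qed
  qed
  moreover have "card ((\<lambda>j. 2 * j + 1) ` {0..<k}) = k" by (simp add: card_image inj_on_def)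
  ultimately show "lpk n (lpkperm k) = k" by (simp add: lpk_def)
qed

lemma exists_lpk:
  assumes "\<exists>\<pi>. \<pi> permutes {1..n} \<and> lpk n \<pi> = k + 1"
  shows "\<exists>\<pi>. \<pi> permutes {1..n} \<and> lpk n \<pi> = k"
proof -
  obtain \<pi> where p: "\<pi> permutes {1..n}" "lpk n \<pi> = k + 1" using assms by blast
  have "2 * (k + 1) \<le> n" using Plpk_bound[of n "uw \<pi>"] lpk_eq[OF p(1)] p(2) by simp
  then have "2 * k \<le> n" by simp
  then show ?thesis using lpkperm_ok by blast
qed

lemma exists_pk:
  assumes "n \<ge> 1" "\<exists>\<pi>. \<pi> permutes {1..n} \<and> pk n \<pi> = k + 1"
  shows "\<exists>\<pi>. \<pi> permutes {1..n} \<and> pk n \<pi> = k"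
proof -
  obtain \<pi> where p: "\<pi> permutes {1..n}" "pk n \<pi> = k + 1" using assms(2) by blast
  have "2 * (k + 1) + 1 \<le> n" using Ppk_bound[OF assms(1), of "uw \<pi>"] pk_eq[OF p(1)] p(2) by simp
  then have "2 * k + 1 \<le> n" by simp
  then show ?thesis using pkperm_ok by blast
qed

lemma exists_des:
  assumes "n \<ge> 1" "\<exists>\<pi>. \<pi> permutes {1..n} \<and> des n \<pi> = k + 1"
  shows "\<exists>\<pi>. \<pi> permutes {1..n} \<and> des n \<pi> = k"
proof -
  obtain \<pi> where p: "\<pi> permutes {1..n}" "des n \<pi> = k + 1" using assms(2) by blast
  have "k + 1 + 1 \<le> n" using Pdes_bound[OF assms(1), of "uw \<pi>"] des_eq[OF p(1)] p(2) by simp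
  then have "k + 1 \<le> n" by simp
  then show ?thesis using desperm_ok by blast
qed

lemma Omega_mono:
  assumes n: "n \<ge> 1"
  shows "Omega n (k + 1) m \<le> Omega n k m"
proof (cases "\<exists>\<pi>. \<pi> permutes {1..n} \<and> lpk n \<pi> = k + 1")
  case True
  have E0: "\<exists>\<pi>. \<pi> permutes {1..n} \<and> lpk n \<pi> = k" by (rule exists_lpk[OF True])
  define \<pi>1 where "\<pi>1 = (SOME \<pi>. \<pi> permutes {1..n} \<and> lpk n \<pi> = k + 1)"
  define \<pi>0 where "\<pi>0 = (SOME \<pi>. \<pi> permutes {1..n} \<and> lpk n \<pi> = k)"
  have p1: "\<pi>1 permutes {1..n}" "lpk n \<pi>1 = k + 1" using someI_ex[OF True] unfolding \<pi>1_def by blast+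
  have p0: "\<pi>0 permutes {1..n}" "lpk n \<pi>0 = k" using someI_ex[OF E0] unfolding \<pi>0_def by blast+
  have "Omega n (k + 1) m = card (Gset n (uw \<pi>1) {- int m..int m})"
    using True card_ppart[OF p1(1)] unfolding Omega_def Omega_pi_def \<pi>1_def by simp
  also have "\<dots> \<le> card (Gset n (uw \<pi>0) {- int m..int m})"
    by (rule lpk_cmp[where ua="uw \<pi>0" and ub="uw \<pi>1", OF n uw0 uw0]) (use p0 p1 lpk_eq in simp)
  also have "\<dots> = Omega n k m"
    using E0 card_ppart[OF p0(1)] unfolding Omega_def Omega_pi_def \<pi>0_def by simp
  finally show ?thesis .
next
  case False
  have "Omega n (k + 1) m = 0" unfolding Omega_def using False by (rule if_not_P)
  then show ?thesis by simp
qed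

lemma Omega_star_mono:
  assumes n: "n \<ge> 1"
  shows "Omega_star n (k + 1) m \<le> Omega_star n k m"
proof (cases "\<exists>\<pi>. \<pi> permutes {1..n} \<and> pk n \<pi> = k + 1")
  case True
  have E0: "\<exists>\<pi>. \<pi> permutes {1..n} \<and> pk n \<pi> = k" by (rule exists_pk[OF n True])
  define \<pi>1 where "\<pi>1 = (SOME \<pi>. \<pi> permutes {1..n} \<and> pk n \<pi> = k + 1)"
  define \<pi>0 where "\<pi>0 = (SOME \<pi>. \<pi> permutes {1..n} \<and> pk n \<pi> = k)"
  have p1: "\<pi>1 permutes {1..n}" "pk n \<pi>1 = k + 1" using someI_ex[OF True] unfolding \<pi>1_def by blast+
  have p0: "\<pi>0 permutes {1..n}" "pk n \<pi>0 = k" using someI_ex[OF E0] unfolding \<pi>0_def by blast+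
  have "Omega_star n (k + 1) m = card (Gset n (uw \<pi>1) ({- int m..int m} - {0}))"
    using True card_ppart[OF p1(1)] unfolding Omega_star_def Omega_star_pi_def \<pi>1_def by simp
  also have "\<dots> \<le> card (Gset n (uw \<pi>0) ({- int m..int m} - {0}))"
    by (rule star_cmp[where ua="uw \<pi>0" and ub="uw \<pi>1", OF n uw0 uw0]) (use p0 p1 pk_eq in simp)
  also have "\<dots> = Omega_star n k m"
    using E0 card_ppart[OF p0(1)] unfolding Omega_star_def Omega_star_pi_def \<pi>0_def by simp
  finally show ?thesis .
next
  case False
  have "Omega_star n (k + 1) m = 0" unfolding Omega_star_def using False by (rule if_not_P)
  then show ?thesis by simp
qed

lemma Omega_plus_mono:
  assumes n: "n \<ge> 1"
  shows "Omega_plus n (k + 1) m \<le> Omega_plus n k m"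
proof (cases "\<exists>\<pi>. \<pi> permutes {1..n} \<and> des n \<pi> = k + 1")
  case True
  have E0: "\<exists>\<pi>. \<pi> permutes {1..n} \<and> des n \<pi> = k" by (rule exists_des[OF n True])
  define \<pi>1 where "\<pi>1 = (SOME \<pi>. \<pi> permutes {1..n} \<and> des n \<pi> = k + 1)"
  define \<pi>0 where "\<pi>0 = (SOME \<pi>. \<pi> permutes {1..n} \<and> des n \<pi> = k)"
  have p1: "\<pi>1 permutes {1..n}" "des n \<pi>1 = k + 1" using someI_ex[OF True] unfolding \<pi>1_def by blast+
  have p0: "\<pi>0 permutes {1..n}" "des n \<pi>0 = k" using someI_ex[OF E0] unfolding \<pi>0_def by blast+
  have "Omega_plus n (k + 1) m = card (Gset n (uw \<pi>1) {1..int m})"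
    using True card_ppart[OF p1(1)] unfolding Omega_plus_def Omega_plus_pi_def \<pi>1_def by simp
  also have "\<dots> \<le> card (Gset n (uw \<pi>0) {1..int m})"
    by (rule des_cmp[where ua="uw \<pi>0" and ub="uw \<pi>1", OF n]) (use p0 p1 des_eq in simp)
  also have "\<dots> = Omega_plus n k m"
    using E0 card_ppart[OF p0(1)] unfolding Omega_plus_def Omega_plus_pi_def \<pi>0_def by simp
  finally show ?thesis .
next
  case False
  have "Omega_plus n (k + 1) m = 0" unfolding Omega_plus_def using False by (rule if_not_P)
  then show ?thesis by simp
qed

theorem lemma3p5:
  fixes n m k :: nat
  assumes "n \<ge> 1"
  shows "Omega n k m \<ge> Omega n (k + 1) m \<and>
         Omega_star n k m \<ge> Omega_star n (k + 1) m \<and>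
         Omega_plus n k m \<ge> Omega_plus n (k + 1) m"
  using Omega_mono[OF assms] Omega_star_mono[OF assms] Omega_plus_mono[OF assms] by simp

end
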